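(* Let $\Sigma$ be a finite alphabet whose characters can be compared in constant time. There is an online streaming algorithm that, given a string $w \in \Sigma^*$ of length $n$, decides whether $w \in L_{\mathrm{UNIQ}}$ (i.e. whether $w$ is uniquely decodable from its bigrams) in time $\Theta(n)$ and space $O(|\Sigma|)$.
   Context: Let $\$ \notin \Sigma$ be a delimiter symbol and $\Sigma_\$ = \Sigma \cup \{\$\}$. For a string $x \in \$\Sigma^*\$$, its bigram vector $\Phi(x) \in \mathbb{N}^{\Sigma_\$^2}$ records, for each pair $(c,d) \in \Sigma_\$^2$, the number of indices $j$ with $x[j]x[j+1] = cd$ (occurrences as a contiguous substring, counting overlaps). A string $w \in \Sigma^*$ is uniquely decodable, written $w \in L_{\mathrm{UNIQ}}$, if the only string $x \in \$\Sigma^*\$$ with $\Phi(x) = \Phi(\$w\$)$ is $x = \$w\$$. *)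

theory Defs
  imports Main
begin

text \<open>Strings over the extended alphabet are lists over 'a option; None plays the
  role of the delimiter symbol.\<close>

definition bigram :: "'b list \<Rightarrow> 'b \<times> 'b \<Rightarrow> nat" where
  "bigram x = (\<lambda>(c, d). card {j. Suc j < length x \<and> x ! j = c \<and> x ! Suc j = d})"

definition delim :: "'a list \<Rightarrow> 'a option list" where
  "delim w = None # map Some w @ [None]"

definition uniq_dec :: "'a set \<Rightarrow> 'a list \<Rightarrow> bool" where
  "uniq_dec \<Sigma> w \<longleftrightarrow>
     (\<forall>x. set x \<subseteq> \<Sigma> \<and> bigram (delim x) = bigram (delim w) \<longrightarrow> x = w)"

datatype instr = LoadC nat nat | Add nat nat nat | Sub nat nat nat
  | LoadI nat nat | StoreI nat nat | Jz nat nat | Jmp nat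

type_synonym config = "nat \<times> (nat \<Rightarrow> nat)"

fun exec_instr :: "instr \<Rightarrow> config \<Rightarrow> config" where
  "exec_instr (LoadC r v) (pc, m) = (Suc pc, m(r := v))"
| "exec_instr (Add r a b) (pc, m) = (Suc pc, m(r := m a + m b))"
| "exec_instr (Sub r a b) (pc, m) = (Suc pc, m(r := m a - m b))"
| "exec_instr (LoadI r a) (pc, m) = (Suc pc, m(r := m (m a)))"
| "exec_instr (StoreI a r) (pc, m) = (Suc pc, m(m a := m r))"
| "exec_instr (Jz r l) (pc, m) = (if m r = 0 then l else Suc pc, m)"
| "exec_instr (Jmp l) (pc, m) = (l, m)"

fun touched :: "instr \<Rightarrow> (nat \<Rightarrow> nat) \<Rightarrow> nat set" where
  "touched (LoadC r v) m = {r}"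
| "touched (Add r a b) m = {r, a, b}"
| "touched (Sub r a b) m = {r, a, b}"
| "touched (LoadI r a) m = {r, a, m a}"
| "touched (StoreI a r) m = {a, r, m a}"
| "touched (Jz r l) m = {r}"
| "touched (Jmp l) m = {}"

definition step :: "instr list \<Rightarrow> config \<Rightarrow> config" where
  "step P cfg = (if fst cfg < length P then exec_instr (P ! fst cfg) cfg else cfg)"

definition cfg_at :: "instr list \<Rightarrow> (nat \<Rightarrow> nat) \<Rightarrow> nat \<Rightarrow> config" where
  "cfg_at P m i = (step P ^^ i) (0, m)"

definition halts_in :: "instr list \<Rightarrow> (nat \<Rightarrow> nat) \<Rightarrow> nat \<Rightarrow> bool" where
  "halts_in P m t \<longleftrightarrow> length P \<le> fst (cfg_at P m t) \<and> (\<forall>i<t. fst (cfg_at P m i) < length P)"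

text \<open>Resource constraints during the first t steps: only addresses below S are
  accessed, and every memory cell holds a value at most V (word-size bound).\<close>
definition within :: "instr list \<Rightarrow> nat \<Rightarrow> nat \<Rightarrow> (nat \<Rightarrow> nat) \<Rightarrow> nat \<Rightarrow> bool" where
  "within P S V m t \<longleftrightarrow>
     (\<forall>i<t. touched (P ! fst (cfg_at P m i)) (snd (cfg_at P m i)) \<subseteq> {..<S}) \<and>
     (\<forall>i\<le>t. \<forall>a. snd (cfg_at P m i) a \<le> V)"

definition run :: "instr list \<Rightarrow> nat \<Rightarrow> nat \<Rightarrow> (nat \<Rightarrow> nat) \<Rightarrow> (nat \<times> (nat \<Rightarrow> nat)) option" where
  "run P S V m = (if \<exists>t. halts_in P m t \<and> within P S V m t
     then (let t = (THE t. halts_in P m t) in Some (t, snd (cfg_at P m t))) else None)"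

text \<open>Single left-to-right pass: for each input character c, put c into register 0
  and run the step program (reading a character costs one time unit).\<close>
fun stream :: "instr list \<Rightarrow> nat \<Rightarrow> nat \<Rightarrow> (nat \<Rightarrow> nat) \<Rightarrow> nat list
                 \<Rightarrow> (nat \<times> (nat \<Rightarrow> nat)) option" where
  "stream P S V m [] = Some (0, m)"
| "stream P S V m (c # cs) =
     (case run P S V (m(0 := c)) of
        None \<Rightarrow> None
      | Some (t, m') \<Rightarrow> map_option (\<lambda>(t', m''). (Suc t + t', m'')) (stream P S V m' cs))"

text \<open>The answer is
  "accept" iff register 0 is nonzero at the end.\<close>
definition stream_alg :: "instr list \<Rightarrow> instr list \<Rightarrow> nat \<Rightarrow> nat \<Rightarrow> nat \<Rightarrow> nat list
                 \<Rightarrow> (nat \<times> (nat \<Rightarrow> nat)) option" where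
  "stream_alg Pstep Pfin S V k w =
     (case stream Pstep S V ((\<lambda>_. 0)(1 := k)) w of
        None \<Rightarrow> None
      | Some (t, m) \<Rightarrow> map_option (\<lambda>(t', m'). (t + t', m')) (run Pfin S V m))"

end

theory Submission
  imports Defs "HOL-Library.Multiset"
begin

definition bnd :: "nat \<Rightarrow> (nat \<Rightarrow> nat) \<Rightarrow> bool" where
  "bnd V m \<longleftrightarrow> (\<forall>a. m a \<le> V)"

definition reach :: "instr list \<Rightarrow> nat \<Rightarrow> nat \<Rightarrow> config \<Rightarrow> nat \<Rightarrow> config \<Rightarrow> bool" where
  "reach P S V c0 t c1 \<longleftrightarrow> (step P ^^ t) c0 = c1 \<and>
     (\<forall>i<t. fst ((step P ^^ i) c0) < length P \<and>
        touched (P ! fst ((step P ^^ i) c0)) (snd ((step P ^^ i) c0)) \<subseteq> {..<S}) \<and>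
     (\<forall>i\<le>t. bnd V (snd ((step P ^^ i) c0)))"

definition wp :: "instr list \<Rightarrow> nat \<Rightarrow> nat \<Rightarrow> nat \<Rightarrow> (nat \<Rightarrow> nat) \<Rightarrow> (nat \<Rightarrow> (nat \<Rightarrow> nat) \<Rightarrow> bool) \<Rightarrow> bool" where
  "wp P S V pc m Q \<longleftrightarrow> (\<exists>t pc' m'. reach P S V (pc, m) t (pc', m') \<and> length P \<le> pc' \<and> Q t m')"

lemma wp_halt: "length P \<le> pc \<Longrightarrow> bnd V m \<Longrightarrow> Q 0 m \<Longrightarrow> wp P S V pc m Q"
  unfolding wp_def reach_def by (rule exI[of _ 0]) auto

lemma wp_step:
  assumes "pc < length P" "touched (P ! pc) m \<subseteq> {..<S}" "bnd V m"
    "wp P S V (fst (exec_instr (P ! pc) (pc, m))) (snd (exec_instr (P ! pc) (pc, m))) (\<lambda>t. Q (Suc t))"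
  shows "wp P S V pc m Q"
proof -
  have st: "step P (pc, m) = exec_instr (P ! pc) (pc, m)" using assms(1) by (simp add: step_def)
  obtain t pc' m' where r: "reach P S V (exec_instr (P ! pc) (pc, m)) t (pc', m')" "length P \<le> pc'" "Q (Suc t) m'"
    using assms(4) unfolding wp_def by auto
  have fp: "(step P ^^ Suc i) (pc, m) = (step P ^^ i) (exec_instr (P ! pc) (pc, m))" for i
    by (simp only: funpow_Suc_right comp_apply st)
  have A: "(step P ^^ Suc t) (pc, m) = (pc', m')" using r(1) fp unfolding reach_def by simp
  have B: "\<forall>i<Suc t. fst ((step P ^^ i) (pc, m)) < length P \<and>
        touched (P ! fst ((step P ^^ i) (pc, m))) (snd ((step P ^^ i) (pc, m))) \<subseteq> {..<S}"
  proof (intro allI impI)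
    fix i assume "i < Suc t"
    then show "fst ((step P ^^ i) (pc, m)) < length P \<and>
        touched (P ! fst ((step P ^^ i) (pc, m))) (snd ((step P ^^ i) (pc, m))) \<subseteq> {..<S}"
      using r(1) assms(1,2) fp unfolding reach_def by (cases i) auto
  qed
  have C: "\<forall>i\<le>Suc t. bnd V (snd ((step P ^^ i) (pc, m)))"
  proof (intro allI impI)
    fix i assume "i \<le> Suc t"
    then show "bnd V (snd ((step P ^^ i) (pc, m)))"
      using r(1) assms(3) fp unfolding reach_def by (cases i) auto
  qed
  have "reach P S V (pc, m) (Suc t) (pc', m')" unfolding reach_def using A B C by blast
  then show ?thesis using r unfolding wp_def by blast
qed

lemma wp_unfold:
  assumes "if pc < length P then touched (P ! pc) m \<subseteq> {..<S} \<and> bnd V m \<and>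
    wp P S V (fst (exec_instr (P ! pc) (pc, m))) (snd (exec_instr (P ! pc) (pc, m))) (\<lambda>t. Q (Suc t))
    else bnd V m \<and> Q 0 m"
  shows "wp P S V pc m Q"
  using assms wp_step[of pc P m S V Q] wp_halt[of P pc V m Q S] by (auto split: if_splits)

lemma wp_mono: "wp P S V pc m Q \<Longrightarrow> (\<And>t m. Q t m \<Longrightarrow> R t m) \<Longrightarrow> wp P S V pc m R"
  unfolding wp_def by blast

lemma halts_unique: "halts_in P m t1 \<Longrightarrow> halts_in P m t2 \<Longrightarrow> t1 = t2"
  unfolding halts_in_def by (metis linorder_neqE_nat not_le)

lemma run_wp:
  assumes "wp P S V 0 m Q"
  shows "\<exists>t m'. run P S V m = Some (t, m') \<and> Q t m'"
proof -
  obtain t pc' m' where r: "reach P S V (0, m) t (pc', m')" "length P \<le> pc'" "Q t m'"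
    using assms unfolding wp_def by auto
  have h: "halts_in P m t" using r unfolding reach_def halts_in_def cfg_at_def by auto
  have w: "within P S V m t" using r unfolding reach_def within_def cfg_at_def bnd_def by auto
  have th: "(THE t. halts_in P m t) = t" using h halts_unique by blast
  have "run P S V m = Some (t, m')" unfolding run_def using h w th r(1)
    unfolding reach_def cfg_at_def by (auto simp: Let_def)
  then show ?thesis using r by blast
qed


definition wpto :: "instr list \<Rightarrow> nat \<Rightarrow> nat \<Rightarrow> nat set \<Rightarrow> nat \<Rightarrow> (nat \<Rightarrow> nat) \<Rightarrow> (nat \<Rightarrow> nat \<Rightarrow> (nat \<Rightarrow> nat) \<Rightarrow> bool) \<Rightarrow> bool" where
  "wpto P S V stops pc m R \<longleftrightarrow> (\<exists>t pc' m'. reach P S V (pc, m) t (pc', m') \<and> pc' \<in> stops \<and> R t pc' m')"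

lemma reach_0: "bnd V m \<Longrightarrow> reach P S V (pc, m) 0 (pc, m)"
  unfolding reach_def by auto

lemma reach_Suc:
  assumes "pc < length P" "touched (P ! pc) m \<subseteq> {..<S}" "bnd V m"
    "reach P S V (exec_instr (P ! pc) (pc, m)) t c"
  shows "reach P S V (pc, m) (Suc t) c"
proof -
  have st: "step P (pc, m) = exec_instr (P ! pc) (pc, m)" using assms(1) by (simp add: step_def)
  have fp: "(step P ^^ Suc i) (pc, m) = (step P ^^ i) (exec_instr (P ! pc) (pc, m))" for i
    by (simp only: funpow_Suc_right comp_apply st)
  have A: "(step P ^^ Suc t) (pc, m) = c" using assms(4) fp unfolding reach_def by simp
  have B: "\<forall>i<Suc t. fst ((step P ^^ i) (pc, m)) < length P \<and>
        touched (P ! fst ((step P ^^ i) (pc, m))) (snd ((step P ^^ i) (pc, m))) \<subseteq> {..<S}"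
  proof (intro allI impI)
    fix i assume "i < Suc t"
    then show "fst ((step P ^^ i) (pc, m)) < length P \<and>
        touched (P ! fst ((step P ^^ i) (pc, m))) (snd ((step P ^^ i) (pc, m))) \<subseteq> {..<S}"
      using assms(1,2,4) fp unfolding reach_def by (cases i) auto
  qed
  have C: "\<forall>i\<le>Suc t. bnd V (snd ((step P ^^ i) (pc, m)))"
  proof (intro allI impI)
    fix i assume "i \<le> Suc t"
    then show "bnd V (snd ((step P ^^ i) (pc, m)))"
      using assms(3,4) fp unfolding reach_def by (cases i) auto
  qed
  show ?thesis unfolding reach_def using A B C by blast
qed

lemma reach_trans: "reach P S V c0 t1 c1 \<Longrightarrow> reach P S V c1 t2 c2 \<Longrightarrow> reach P S V c0 (t1 + t2) c2"
proof (induction t1 arbitrary: c0)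
  case 0 then show ?case unfolding reach_def by auto
next
  case (Suc t1)
  obtain pc m where c0: "c0 = (pc, m)" by fastforce
  have r: "reach P S V c0 (Suc t1) c1" by fact
  have A: "\<forall>i<Suc t1. fst ((step P ^^ i) (pc, m)) < length P \<and>
        touched (P ! fst ((step P ^^ i) (pc, m))) (snd ((step P ^^ i) (pc, m))) \<subseteq> {..<S}"
    and B: "\<forall>i\<le>Suc t1. bnd V (snd ((step P ^^ i) (pc, m)))"
    and Cc: "(step P ^^ Suc t1) (pc, m) = c1"
    using r unfolding reach_def c0 by auto
  have pc: "pc < length P" "touched (P ! pc) m \<subseteq> {..<S}" "bnd V m"
    using A[rule_format, of 0] B[rule_format, of 0] by auto
  have st: "step P (pc, m) = exec_instr (P ! pc) (pc, m)" using pc(1) by (simp add: step_def)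
  have fp: "(step P ^^ Suc i) (pc, m) = (step P ^^ i) (exec_instr (P ! pc) (pc, m))" for i
    by (simp only: funpow_Suc_right comp_apply st)
  have "reach P S V (exec_instr (P ! pc) (pc, m)) t1 c1"
    unfolding reach_def
  proof (intro conjI allI impI)
    show "(step P ^^ t1) (exec_instr (P ! pc) (pc, m)) = c1" using Cc fp by simp
  next
    fix i assume "i < t1"
    then show "fst ((step P ^^ i) (exec_instr (P ! pc) (pc, m))) < length P"
      using A[rule_format, of "Suc i"] fp by simp
  next
    fix i assume "i < t1"
    then show "touched (P ! fst ((step P ^^ i) (exec_instr (P ! pc) (pc, m))))
          (snd ((step P ^^ i) (exec_instr (P ! pc) (pc, m)))) \<subseteq> {..<S}"
      using A[rule_format, of "Suc i"] fp by simp
  next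
    fix i assume "i \<le> t1"
    then show "bnd V (snd ((step P ^^ i) (exec_instr (P ! pc) (pc, m))))"
      using B[rule_format, of "Suc i"] fp by simp
  qed
  from Suc.IH[OF this Suc.prems(2)] have "reach P S V (exec_instr (P ! pc) (pc, m)) (t1 + t2) c2" .
  then show ?case using reach_Suc[OF pc] c0 by simp
qed

lemma wpto_stop: "pc \<in> stops \<Longrightarrow> bnd V m \<Longrightarrow> R 0 pc m \<Longrightarrow> wpto P S V stops pc m R"
  unfolding wpto_def using reach_0 by blast

lemma wpto_first:
  assumes "pc < length P \<and> touched (P ! pc) m \<subseteq> {..<S} \<and> bnd V m \<and>
    wpto P S V stops (fst (exec_instr (P ! pc) (pc, m))) (snd (exec_instr (P ! pc) (pc, m))) (\<lambda>t. R (Suc t))"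
  shows "wpto P S V stops pc m R"
  using assms reach_Suc[of pc P m S V] unfolding wpto_def by fastforce

lemma wpto_unfold:
  assumes "if pc \<in> stops then bnd V m \<and> R 0 pc m else pc < length P \<and> touched (P ! pc) m \<subseteq> {..<S} \<and> bnd V m \<and>
    wpto P S V stops (fst (exec_instr (P ! pc) (pc, m))) (snd (exec_instr (P ! pc) (pc, m))) (\<lambda>t. R (Suc t))"
  shows "wpto P S V stops pc m R"
  using assms wpto_first[of pc P m S V stops R] wpto_stop[of pc stops V m R P S] by (auto split: if_splits)

lemma wpto_wp:
  assumes "wpto P S V stops pc m R"
    "\<And>t pc' m'. pc' \<in> stops \<Longrightarrow> R t pc' m' \<Longrightarrow> wp P S V pc' m' (\<lambda>t'. Q (t + t'))"
  shows "wp P S V pc m Q"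
proof -
  obtain t pc' m' where r: "reach P S V (pc, m) t (pc', m')" "pc' \<in> stops" "R t pc' m'"
    using assms(1) unfolding wpto_def by auto
  obtain t2 pc2 m2 where r2: "reach P S V (pc', m') t2 (pc2, m2)" "length P \<le> pc2" "Q (t + t2) m2"
    using assms(2)[OF r(2,3)] unfolding wp_def by auto
  show ?thesis unfolding wp_def using reach_trans[OF r(1) r2(1)] r2 by blast
qed

record st = sAmb :: nat  sJ :: nat  sP :: nat  sH :: nat
  sLast :: "nat \<Rightarrow> nat"  sFirst :: "nat \<Rightarrow> nat"  sSucc :: "nat \<Rightarrow> nat"
  sHx :: "nat \<Rightarrow> nat"  sF :: "nat \<Rightarrow> nat"  sC :: "nat \<Rightarrow> nat"

fun mloop :: "(nat \<Rightarrow> nat) \<Rightarrow> (nat \<Rightarrow> nat) \<Rightarrow> nat \<Rightarrow> nat \<Rightarrow> nat \<times> nat" where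
  "mloop F C h f = (if h = 0 then (0, f) else if f \<le> C h then
      mloop F C (h - 1) (if F h \<le> f then F h else f) else (h, f))"

declare mloop.simps[simp del]

lemma mloop_0[simp]: "mloop F C 0 f = (0, f)" by (simp add: mloop.simps)
lemma mloop_pop: "h \<noteq> 0 \<Longrightarrow> f \<le> C h \<Longrightarrow> mloop F C h f = mloop F C (h - 1) (if F h \<le> f then F h else f)"
  by (simp add: mloop.simps)
lemma mloop_stop: "h \<noteq> 0 \<Longrightarrow> \<not> f \<le> C h \<Longrightarrow> mloop F C h f = (h, f)"
  by (simp add: mloop.simps)
lemma mloop_le: "fst (mloop F C h f) \<le> h"
proof (induction F C h f rule: mloop.induct)
  case (1 F C h f)
  show ?case
  proof (cases "h = 0")
    case True then show ?thesis by simp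
  next
    case False
    show ?thesis
    proof (cases "f \<le> C h")
      case True
      then show ?thesis using 1 False mloop_pop[of h f C F, OF False True] by simp
    next
      case False2: False
      then show ?thesis using mloop_stop[of h f C F, OF False False2] by simp
    qed
  qed
qed

definition dev :: "st \<Rightarrow> nat \<Rightarrow> st" where
  "dev s u = (if sJ s - 1 = 0 then s else
     let p = sP s; f = sFirst s p in
     if sJ s - 1 \<le> f then s\<lparr>sSucc := (sSucc s)(p := u)\<rparr>
     else if sSucc s p = u then s
     else let hf = mloop (sF s) (sC s) (sH s) f in
       s\<lparr>sH := Suc (fst hf), sF := (sF s)(Suc (fst hf) := snd hf),
          sC := (sC s)(Suc (fst hf) := sJ s - 1)\<rparr>)"

definition upd :: "st \<Rightarrow> nat \<Rightarrow> st" where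
  "upd s u = s\<lparr>sLast := (sLast s)(u := sJ s), sHx := (sHx s)(u := sH s), sP := u\<rparr>"

definition dead :: "st \<Rightarrow> nat \<Rightarrow> bool" where
  "dead s u = (let q = sLast s u; hx = sHx s u in
     \<not> hx \<le> sH s \<or> (hx \<noteq> 0 \<and> q \<le> sC s hx) \<or> (Suc hx \<le> sH s \<and> sF s (Suc hx) \<le> q))"

definition query :: "st \<Rightarrow> nat \<Rightarrow> st" where
  "query s u = (if sLast s u = 0 then upd (s\<lparr>sFirst := (sFirst s)(u := sJ s)\<rparr>) u
     else if dead s u then s\<lparr>sAmb := 1\<rparr> else upd s u)"

definition absstep :: "st \<Rightarrow> nat \<Rightarrow> st" where
  "absstep s u = (if sAmb s = 0 then query (dev (s\<lparr>sJ := Suc (sJ s)\<rparr>) u) u else s)"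

definition Pstep :: "instr list" where
  "Pstep = [
  Jz 2 2,
  Jmp 127,
  LoadC 7 1,
  Add 3 3 7,
  Sub 13 3 7,
  Jz 13 70,
  Add 6 4 4,
  Add 6 6 4,
  Add 6 6 4,
  Add 6 6 4,
  Add 6 6 4,
  LoadC 7 16,
  Add 6 6 7,
  LoadC 7 1,
  Add 15 6 7,
  LoadI 8 15,
  Sub 14 13 8,
  Jz 14 67,
  LoadC 7 2,
  Add 15 6 7,
  LoadI 14 15,
  Sub 11 14 0,
  Jz 11 24,
  Jmp 26,
  Sub 11 0 14,
  Jz 11 70,
  Jz 5 51,
  Add 6 5 5,
  Add 6 6 5,
  Add 6 6 5,
  Add 6 6 5,
  Add 6 6 5,
  LoadC 7 16,
  Add 6 6 7,
  LoadC 7 5,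
  Add 15 6 7,
  LoadI 14 15,
  Sub 11 8 14,
  Jz 11 40,
  Jmp 51,
  LoadC 7 4,
  Add 15 6 7,
  LoadI 14 15,
  Sub 11 14 8,
  Jz 11 46,
  Jmp 48,
  LoadC 7 0,
  Add 8 14 7,
  LoadC 7 1,
  Sub 5 5 7,
  Jmp 26,
  LoadC 7 1,
  Add 5 5 7,
  Add 6 5 5,
  Add 6 6 5,
  Add 6 6 5,
  Add 6 6 5,
  Add 6 6 5,
  LoadC 7 16,
  Add 6 6 7,
  LoadC 7 4,
  Add 15 6 7,
  StoreI 15 8,
  LoadC 7 5,
  Add 15 6 7,
  StoreI 15 13,
  Jmp 70,
  LoadC 7 2,
  Add 15 6 7,
  StoreI 15 0,
  Add 12 0 0,
  Add 12 12 0,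
  Add 12 12 0,
  Add 12 12 0,
  Add 12 12 0,
  LoadC 7 16,
  Add 12 12 7,
  LoadI 10 12,
  Jz 10 116,
  LoadC 7 3,
  Add 15 12 7,
  LoadI 11 15,
  Sub 14 11 5,
  Jz 14 85,
  Jmp 126,
  Jz 11 98,
  Add 6 11 11,
  Add 6 6 11,
  Add 6 6 11,
  Add 6 6 11,
  Add 6 6 11,
  LoadC 7 16,
  Add 6 6 7,
  LoadC 7 5,
  Add 15 6 7,
  LoadI 14 15,
  Sub 14 10 14,
  Jz 14 126,
  LoadC 7 1,
  Add 9 11 7,
  Sub 14 9 5,
  Jz 14 103,
  Jmp 119,
  Add 6 9 9,
  Add 6 6 9,
  Add 6 6 9,
  Add 6 6 9,
  Add 6 6 9,
  LoadC 7 16,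
  Add 6 6 7,
  LoadC 7 4,
  Add 15 6 7,
  LoadI 14 15,
  Sub 14 14 10,
  Jz 14 126,
  Jmp 119,
  LoadC 7 1,
  Add 15 12 7,
  StoreI 15 3,
  StoreI 12 3,
  LoadC 7 3,
  Add 15 12 7,
  StoreI 15 5,
  LoadC 7 0,
  Add 4 0 7,
  Jmp 127,
  LoadC 2 1,
  LoadC 0 0,
  LoadC 6 0,
  LoadC 7 0,
  LoadC 8 0,
  LoadC 9 0,
  LoadC 10 0,
  LoadC 11 0,
  LoadC 12 0,
  LoadC 13 0,
  LoadC 14 0,
  LoadC 15 0
]"

lemma Pstep_len[simp]: "length Pstep = 138" by (simp add: Pstep_def)

lemma Pstep_nth[simp]:
  "Pstep ! 0 = Jz 2 2"
  "Pstep ! 1 = Jmp 127"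
  "Pstep ! 2 = LoadC 7 1"
  "Pstep ! 3 = Add 3 3 7"
  "Pstep ! 4 = Sub 13 3 7"
  "Pstep ! 5 = Jz 13 70"
  "Pstep ! 6 = Add 6 4 4"
  "Pstep ! 7 = Add 6 6 4"
  "Pstep ! 8 = Add 6 6 4"
  "Pstep ! 9 = Add 6 6 4"
  "Pstep ! 10 = Add 6 6 4"
  "Pstep ! 11 = LoadC 7 16"
  "Pstep ! 12 = Add 6 6 7"
  "Pstep ! 13 = LoadC 7 1"
  "Pstep ! 14 = Add 15 6 7"
  "Pstep ! 15 = LoadI 8 15"
  "Pstep ! 16 = Sub 14 13 8"
  "Pstep ! 17 = Jz 14 67"
  "Pstep ! 18 = LoadC 7 2"
  "Pstep ! 19 = Add 15 6 7"
  "Pstep ! 20 = LoadI 14 15"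
  "Pstep ! 21 = Sub 11 14 0"
  "Pstep ! 22 = Jz 11 24"
  "Pstep ! 23 = Jmp 26"
  "Pstep ! 24 = Sub 11 0 14"
  "Pstep ! 25 = Jz 11 70"
  "Pstep ! 26 = Jz 5 51"
  "Pstep ! 27 = Add 6 5 5"
  "Pstep ! 28 = Add 6 6 5"
  "Pstep ! 29 = Add 6 6 5"
  "Pstep ! 30 = Add 6 6 5"
  "Pstep ! 31 = Add 6 6 5"
  "Pstep ! 32 = LoadC 7 16"
  "Pstep ! 33 = Add 6 6 7"
  "Pstep ! 34 = LoadC 7 5"
  "Pstep ! 35 = Add 15 6 7"
  "Pstep ! 36 = LoadI 14 15"
  "Pstep ! 37 = Sub 11 8 14"
  "Pstep ! 38 = Jz 11 40"
  "Pstep ! 39 = Jmp 51"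
  "Pstep ! 40 = LoadC 7 4"
  "Pstep ! 41 = Add 15 6 7"
  "Pstep ! 42 = LoadI 14 15"
  "Pstep ! 43 = Sub 11 14 8"
  "Pstep ! 44 = Jz 11 46"
  "Pstep ! 45 = Jmp 48"
  "Pstep ! 46 = LoadC 7 0"
  "Pstep ! 47 = Add 8 14 7"
  "Pstep ! 48 = LoadC 7 1"
  "Pstep ! 49 = Sub 5 5 7"
  "Pstep ! 50 = Jmp 26"
  "Pstep ! 51 = LoadC 7 1"
  "Pstep ! 52 = Add 5 5 7"
  "Pstep ! 53 = Add 6 5 5"
  "Pstep ! 54 = Add 6 6 5"
  "Pstep ! 55 = Add 6 6 5"
  "Pstep ! 56 = Add 6 6 5"
  "Pstep ! 57 = Add 6 6 5"
  "Pstep ! 58 = LoadC 7 16"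
  "Pstep ! 59 = Add 6 6 7"
  "Pstep ! 60 = LoadC 7 4"
  "Pstep ! 61 = Add 15 6 7"
  "Pstep ! 62 = StoreI 15 8"
  "Pstep ! 63 = LoadC 7 5"
  "Pstep ! 64 = Add 15 6 7"
  "Pstep ! 65 = StoreI 15 13"
  "Pstep ! 66 = Jmp 70"
  "Pstep ! 67 = LoadC 7 2"
  "Pstep ! 68 = Add 15 6 7"
  "Pstep ! 69 = StoreI 15 0"
  "Pstep ! 70 = Add 12 0 0"
  "Pstep ! 71 = Add 12 12 0"
  "Pstep ! 72 = Add 12 12 0"
  "Pstep ! 73 = Add 12 12 0"
  "Pstep ! 74 = Add 12 12 0"
  "Pstep ! 75 = LoadC 7 16"
  "Pstep ! 76 = Add 12 12 7"
  "Pstep ! 77 = LoadI 10 12"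
  "Pstep ! 78 = Jz 10 116"
  "Pstep ! 79 = LoadC 7 3"
  "Pstep ! 80 = Add 15 12 7"
  "Pstep ! 81 = LoadI 11 15"
  "Pstep ! 82 = Sub 14 11 5"
  "Pstep ! 83 = Jz 14 85"
  "Pstep ! 84 = Jmp 126"
  "Pstep ! 85 = Jz 11 98"
  "Pstep ! 86 = Add 6 11 11"
  "Pstep ! 87 = Add 6 6 11"
  "Pstep ! 88 = Add 6 6 11"
  "Pstep ! 89 = Add 6 6 11"
  "Pstep ! 90 = Add 6 6 11"
  "Pstep ! 91 = LoadC 7 16"
  "Pstep ! 92 = Add 6 6 7"
  "Pstep ! 93 = LoadC 7 5"
  "Pstep ! 94 = Add 15 6 7"
  "Pstep ! 95 = LoadI 14 15"
  "Pstep ! 96 = Sub 14 10 14"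
  "Pstep ! 97 = Jz 14 126"
  "Pstep ! 98 = LoadC 7 1"
  "Pstep ! 99 = Add 9 11 7"
  "Pstep ! 100 = Sub 14 9 5"
  "Pstep ! 101 = Jz 14 103"
  "Pstep ! 102 = Jmp 119"
  "Pstep ! 103 = Add 6 9 9"
  "Pstep ! 104 = Add 6 6 9"
  "Pstep ! 105 = Add 6 6 9"
  "Pstep ! 106 = Add 6 6 9"
  "Pstep ! 107 = Add 6 6 9"
  "Pstep ! 108 = LoadC 7 16"
  "Pstep ! 109 = Add 6 6 7"
  "Pstep ! 110 = LoadC 7 4"
  "Pstep ! 111 = Add 15 6 7"
  "Pstep ! 112 = LoadI 14 15"
  "Pstep ! 113 = Sub 14 14 10"
  "Pstep ! 114 = Jz 14 126"
  "Pstep ! 115 = Jmp 119"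
  "Pstep ! 116 = LoadC 7 1"
  "Pstep ! 117 = Add 15 12 7"
  "Pstep ! 118 = StoreI 15 3"
  "Pstep ! 119 = StoreI 12 3"
  "Pstep ! 120 = LoadC 7 3"
  "Pstep ! 121 = Add 15 12 7"
  "Pstep ! 122 = StoreI 15 5"
  "Pstep ! 123 = LoadC 7 0"
  "Pstep ! 124 = Add 4 0 7"
  "Pstep ! 125 = Jmp 127"
  "Pstep ! 126 = LoadC 2 1"
  "Pstep ! 127 = LoadC 0 0"
  "Pstep ! 128 = LoadC 6 0"
  "Pstep ! 129 = LoadC 7 0"
  "Pstep ! 130 = LoadC 8 0"
  "Pstep ! 131 = LoadC 9 0"
  "Pstep ! 132 = LoadC 10 0"
  "Pstep ! 133 = LoadC 11 0"
  "Pstep ! 134 = LoadC 12 0"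
  "Pstep ! 135 = LoadC 13 0"
  "Pstep ! 136 = LoadC 14 0"
  "Pstep ! 137 = LoadC 15 0"
  by (simp_all add: Pstep_def)

definition Pfin :: "instr list" where
  "Pfin = [LoadC 0 1, Jz 2 3, LoadC 0 0]"

definition fld :: "st \<Rightarrow> nat \<Rightarrow> nat \<Rightarrow> nat" where
  "fld s r y = (if r = 0 then sLast s y else if r = 1 then sFirst s y else if r = 2 then sSucc s y
     else if r = 3 then sHx s y else if r = 4 then sF s y else sC s y)"

definition enc :: "nat \<Rightarrow> st \<Rightarrow> nat \<Rightarrow> nat" where
  "enc k s a = (if a = 1 then k else if a = 2 then sAmb s else if a = 3 then sJ s
     else if a = 4 then sP s else if a = 5 then sH s
     else if 16 \<le> a \<and> a < 22 + 6 * k then fld s ((a - 16) mod 6) ((a - 16) div 6) else 0)"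

definition memT :: "nat \<Rightarrow> st \<Rightarrow> nat \<Rightarrow> (nat \<Rightarrow> nat) \<Rightarrow> nat \<Rightarrow> nat" where
  "memT k s u tv a = (if a = 0 then u else if 6 \<le> a \<and> a \<le> 15 then tv a else enc k s a)"

definition tb :: "nat \<Rightarrow> (nat \<Rightarrow> nat) \<Rightarrow> bool" where "tb V tv \<longleftrightarrow> (\<forall>a. tv a \<le> V)"

lemma tb_upd[simp]: "tb V tv \<Longrightarrow> v \<le> V \<Longrightarrow> tb V (tv(a := v))"
  unfolding tb_def by auto

lemma diff_le_V[simp]: "a \<le> V \<Longrightarrow> a - b \<le> (V::nat)" by simp

lemma rec_addr: "16 \<le> (a::nat) \<Longrightarrow> a = 16 + 6 * ((a - 16) div 6) + (a - 16) mod 6" by simp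

lemma dm6[simp]: "Suc (6*x) div 6 = x" "Suc (6*x) mod 6 = 1"
  "Suc (Suc (6*x)) div 6 = x" "Suc (Suc (6*x)) mod 6 = 2"
  "Suc (Suc (Suc (6*x))) div 6 = x" "Suc (Suc (Suc (6*x))) mod 6 = 3"
  "Suc (Suc (Suc (Suc (6*x)))) div 6 = x" "Suc (Suc (Suc (Suc (6*x)))) mod 6 = 4"
  "Suc (Suc (Suc (Suc (Suc (6*x))))) div 6 = x" "Suc (Suc (Suc (Suc (Suc (6*x))))) mod 6 = 5"
  by presburger+

context
  fixes k :: nat
begin

lemma memT_0[simp]: "memT k s u tv 0 = u" by (simp add: memT_def)
lemma memT_1[simp]: "memT k s u tv (Suc 0) = k" by (simp add: memT_def enc_def)
lemma memT_2[simp]: "memT k s u tv 2 = sAmb s" by (simp add: memT_def enc_def)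
lemma memT_3[simp]: "memT k s u tv 3 = sJ s" by (simp add: memT_def enc_def)
lemma memT_4[simp]: "memT k s u tv 4 = sP s" by (simp add: memT_def enc_def)
lemma memT_5[simp]: "memT k s u tv 5 = sH s" by (simp add: memT_def enc_def)
lemma memT_t[simp]: "6 \<le> a \<Longrightarrow> a \<le> 15 \<Longrightarrow> memT k s u tv a = tv a" by (simp add: memT_def)

lemma memT_r0[simp]: "x \<le> k \<Longrightarrow> memT k s u tv (6 * x + 16) = sLast s x"
  by (simp add: memT_def enc_def fld_def)
lemma memT_r1[simp]: "x \<le> k \<Longrightarrow> memT k s u tv (6 * x + 17) = sFirst s x"
  by (simp add: memT_def enc_def fld_def)
lemma memT_r2[simp]: "x \<le> k \<Longrightarrow> memT k s u tv (6 * x + 18) = sSucc s x"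
  by (simp add: memT_def enc_def fld_def)
lemma memT_r3[simp]: "x \<le> k \<Longrightarrow> memT k s u tv (6 * x + 19) = sHx s x"
  by (simp add: memT_def enc_def fld_def)
lemma memT_r4[simp]: "x \<le> k \<Longrightarrow> memT k s u tv (6 * x + 20) = sF s x"
  by (simp add: memT_def enc_def fld_def)
lemma memT_r5[simp]: "x \<le> k \<Longrightarrow> memT k s u tv (6 * x + 21) = sC s x"
  by (simp add: memT_def enc_def fld_def)

lemma memT_u0[simp]: "(memT k s u tv)(0 := v) = memT k s v tv"
  by (rule ext) (simp add: memT_def)
lemma memT_u2[simp]: "(memT k s u tv)(2 := v) = memT k (s\<lparr>sAmb := v\<rparr>) u tv"
  by (rule ext) (simp add: memT_def enc_def fld_def)
lemma memT_u3[simp]: "(memT k s u tv)(3 := v) = memT k (s\<lparr>sJ := v\<rparr>) u tv"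
  by (rule ext) (simp add: memT_def enc_def fld_def)
lemma memT_u4[simp]: "(memT k s u tv)(4 := v) = memT k (s\<lparr>sP := v\<rparr>) u tv"
  by (rule ext) (simp add: memT_def enc_def fld_def)
lemma memT_u5[simp]: "(memT k s u tv)(5 := v) = memT k (s\<lparr>sH := v\<rparr>) u tv"
  by (rule ext) (simp add: memT_def enc_def fld_def)
lemma memT_ut[simp]: "6 \<le> a \<Longrightarrow> a \<le> 15 \<Longrightarrow> (memT k s u tv)(a := v) = memT k s u (tv(a := v))"
  by (rule ext) (simp add: memT_def)

lemma fld_u0: "m < 6 \<Longrightarrow> m \<noteq> 0 \<or> y \<noteq> x \<Longrightarrow> fld (s\<lparr>sLast := (sLast s)(x := v)\<rparr>) m y = fld s m y"
  unfolding fld_def by (cases "m = 0"; cases "m = 1"; cases "m = 2"; cases "m = 3"; cases "m = 4"; simp)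

lemma memT_ur0[simp]: "x \<le> k \<Longrightarrow> (memT k s u tv)(6 * x + 16 := v) = memT k (s\<lparr>sLast := (sLast s)(x := v)\<rparr>) u tv"
proof (rule ext)
  fix a assume x: "x \<le> k"
  show "((memT k s u tv)(6 * x + 16 := v)) a = memT k (s\<lparr>sLast := (sLast s)(x := v)\<rparr>) u tv a"
  proof (cases "16 \<le> a \<and> a < 22 + 6 * k \<and> (a - 16) mod 6 = 0 \<and> (a - 16) div 6 = x")
    case True
    then have "a = 6 * x + 16" using rec_addr[of a] by simp
    then show ?thesis using x by (simp add: memT_def enc_def fld_def)
  next
    case False
    then have ne: "a \<noteq> 6 * x + 16" using x by auto
    have m6: "(a - 16) mod 6 < 6" by simp
    show ?thesis using ne False fld_u0[OF m6, of "(a - 16) div 6" x s v]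
      by (simp add: memT_def enc_def)
  qed
qed

lemma fld_u1: "m < 6 \<Longrightarrow> m \<noteq> 1 \<or> y \<noteq> x \<Longrightarrow> fld (s\<lparr>sFirst := (sFirst s)(x := v)\<rparr>) m y = fld s m y"
  unfolding fld_def by (cases "m = 0"; cases "m = 1"; cases "m = 2"; cases "m = 3"; cases "m = 4"; simp)

lemma memT_ur1[simp]: "x \<le> k \<Longrightarrow> (memT k s u tv)(6 * x + 17 := v) = memT k (s\<lparr>sFirst := (sFirst s)(x := v)\<rparr>) u tv"
proof (rule ext)
  fix a assume x: "x \<le> k"
  show "((memT k s u tv)(6 * x + 17 := v)) a = memT k (s\<lparr>sFirst := (sFirst s)(x := v)\<rparr>) u tv a"
  proof (cases "16 \<le> a \<and> a < 22 + 6 * k \<and> (a - 16) mod 6 = 1 \<and> (a - 16) div 6 = x")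
    case True
    then have "a = 6 * x + 17" using rec_addr[of a] by simp
    then show ?thesis using x by (simp add: memT_def enc_def fld_def)
  next
    case False
    then have ne: "a \<noteq> 6 * x + 17" using x by auto
    have m6: "(a - 16) mod 6 < 6" by simp
    show ?thesis using ne False fld_u1[OF m6, of "(a - 16) div 6" x s v]
      by (simp add: memT_def enc_def)
  qed
qed

lemma fld_u2: "m < 6 \<Longrightarrow> m \<noteq> 2 \<or> y \<noteq> x \<Longrightarrow> fld (s\<lparr>sSucc := (sSucc s)(x := v)\<rparr>) m y = fld s m y"
  unfolding fld_def by (cases "m = 0"; cases "m = 1"; cases "m = 2"; cases "m = 3"; cases "m = 4"; simp)

lemma memT_ur2[simp]: "x \<le> k \<Longrightarrow> (memT k s u tv)(6 * x + 18 := v) = memT k (s\<lparr>sSucc := (sSucc s)(x := v)\<rparr>) u tv"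
proof (rule ext)
  fix a assume x: "x \<le> k"
  show "((memT k s u tv)(6 * x + 18 := v)) a = memT k (s\<lparr>sSucc := (sSucc s)(x := v)\<rparr>) u tv a"
  proof (cases "16 \<le> a \<and> a < 22 + 6 * k \<and> (a - 16) mod 6 = 2 \<and> (a - 16) div 6 = x")
    case True
    then have "a = 6 * x + 18" using rec_addr[of a] by simp
    then show ?thesis using x by (simp add: memT_def enc_def fld_def)
  next
    case False
    then have ne: "a \<noteq> 6 * x + 18" using x by auto
    have m6: "(a - 16) mod 6 < 6" by simp
    show ?thesis using ne False fld_u2[OF m6, of "(a - 16) div 6" x s v]
      by (simp add: memT_def enc_def)
  qed
qed

lemma fld_u3: "m < 6 \<Longrightarrow> m \<noteq> 3 \<or> y \<noteq> x \<Longrightarrow> fld (s\<lparr>sHx := (sHx s)(x := v)\<rparr>) m y = fld s m y"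
  unfolding fld_def by (cases "m = 0"; cases "m = 1"; cases "m = 2"; cases "m = 3"; cases "m = 4"; simp)

lemma memT_ur3[simp]: "x \<le> k \<Longrightarrow> (memT k s u tv)(6 * x + 19 := v) = memT k (s\<lparr>sHx := (sHx s)(x := v)\<rparr>) u tv"
proof (rule ext)
  fix a assume x: "x \<le> k"
  show "((memT k s u tv)(6 * x + 19 := v)) a = memT k (s\<lparr>sHx := (sHx s)(x := v)\<rparr>) u tv a"
  proof (cases "16 \<le> a \<and> a < 22 + 6 * k \<and> (a - 16) mod 6 = 3 \<and> (a - 16) div 6 = x")
    case True
    then have "a = 6 * x + 19" using rec_addr[of a] by simp
    then show ?thesis using x by (simp add: memT_def enc_def fld_def)
  next
    case False
    then have ne: "a \<noteq> 6 * x + 19" using x by auto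
    have m6: "(a - 16) mod 6 < 6" by simp
    show ?thesis using ne False fld_u3[OF m6, of "(a - 16) div 6" x s v]
      by (simp add: memT_def enc_def)
  qed
qed

lemma fld_u4: "m < 6 \<Longrightarrow> m \<noteq> 4 \<or> y \<noteq> x \<Longrightarrow> fld (s\<lparr>sF := (sF s)(x := v)\<rparr>) m y = fld s m y"
  unfolding fld_def by (cases "m = 0"; cases "m = 1"; cases "m = 2"; cases "m = 3"; cases "m = 4"; simp)

lemma memT_ur4[simp]: "x \<le> k \<Longrightarrow> (memT k s u tv)(6 * x + 20 := v) = memT k (s\<lparr>sF := (sF s)(x := v)\<rparr>) u tv"
proof (rule ext)
  fix a assume x: "x \<le> k"
  show "((memT k s u tv)(6 * x + 20 := v)) a = memT k (s\<lparr>sF := (sF s)(x := v)\<rparr>) u tv a"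
  proof (cases "16 \<le> a \<and> a < 22 + 6 * k \<and> (a - 16) mod 6 = 4 \<and> (a - 16) div 6 = x")
    case True
    then have "a = 6 * x + 20" using rec_addr[of a] by simp
    then show ?thesis using x by (simp add: memT_def enc_def fld_def)
  next
    case False
    then have ne: "a \<noteq> 6 * x + 20" using x by auto
    have m6: "(a - 16) mod 6 < 6" by simp
    show ?thesis using ne False fld_u4[OF m6, of "(a - 16) div 6" x s v]
      by (simp add: memT_def enc_def)
  qed
qed

lemma fld_u5: "m < 6 \<Longrightarrow> m \<noteq> 5 \<or> y \<noteq> x \<Longrightarrow> fld (s\<lparr>sC := (sC s)(x := v)\<rparr>) m y = fld s m y"
  unfolding fld_def by (cases "m = 0"; cases "m = 1"; cases "m = 2"; cases "m = 3"; cases "m = 4"; simp)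

lemma memT_ur5[simp]: "x \<le> k \<Longrightarrow> (memT k s u tv)(6 * x + 21 := v) = memT k (s\<lparr>sC := (sC s)(x := v)\<rparr>) u tv"
proof (rule ext)
  fix a assume x: "x \<le> k"
  show "((memT k s u tv)(6 * x + 21 := v)) a = memT k (s\<lparr>sC := (sC s)(x := v)\<rparr>) u tv a"
  proof (cases "16 \<le> a \<and> a < 22 + 6 * k \<and> (a - 16) mod 6 = 5 \<and> (a - 16) div 6 = x")
    case True
    then have "a = 6 * x + 21" using rec_addr[of a] by simp
    then show ?thesis using x by (simp add: memT_def enc_def fld_def)
  next
    case False
    then have ne: "a \<noteq> 6 * x + 21" using x by auto
    have m6: "(a - 16) mod 6 < 6" by simp
    show ?thesis using ne False fld_u5[OF m6, of "(a - 16) div 6" x s v]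
      by (simp add: memT_def enc_def)
  qed
qed

lemma memT_r0'[simp]: "x \<le> k \<Longrightarrow> memT k s u tv (16 + 6 * x) = sLast s x"
  using memT_r0[of x s u tv] by (simp add: add.commute)
lemma memT_ur0'[simp]: "x \<le> k \<Longrightarrow> (memT k s u tv)(16 + 6 * x := v) = memT k (s\<lparr>sLast := (sLast s)(x := v)\<rparr>) u tv"
  using memT_ur0[of x s u tv v] by (simp add: add.commute)
lemma memT_r1'[simp]: "x \<le> k \<Longrightarrow> memT k s u tv (17 + 6 * x) = sFirst s x"
  using memT_r1[of x s u tv] by (simp add: add.commute)
lemma memT_ur1'[simp]: "x \<le> k \<Longrightarrow> (memT k s u tv)(17 + 6 * x := v) = memT k (s\<lparr>sFirst := (sFirst s)(x := v)\<rparr>) u tv"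
  using memT_ur1[of x s u tv v] by (simp add: add.commute)
lemma memT_r2'[simp]: "x \<le> k \<Longrightarrow> memT k s u tv (18 + 6 * x) = sSucc s x"
  using memT_r2[of x s u tv] by (simp add: add.commute)
lemma memT_ur2'[simp]: "x \<le> k \<Longrightarrow> (memT k s u tv)(18 + 6 * x := v) = memT k (s\<lparr>sSucc := (sSucc s)(x := v)\<rparr>) u tv"
  using memT_ur2[of x s u tv v] by (simp add: add.commute)
lemma memT_r3'[simp]: "x \<le> k \<Longrightarrow> memT k s u tv (19 + 6 * x) = sHx s x"
  using memT_r3[of x s u tv] by (simp add: add.commute)
lemma memT_ur3'[simp]: "x \<le> k \<Longrightarrow> (memT k s u tv)(19 + 6 * x := v) = memT k (s\<lparr>sHx := (sHx s)(x := v)\<rparr>) u tv"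
  using memT_ur3[of x s u tv v] by (simp add: add.commute)
lemma memT_r4'[simp]: "x \<le> k \<Longrightarrow> memT k s u tv (20 + 6 * x) = sF s x"
  using memT_r4[of x s u tv] by (simp add: add.commute)
lemma memT_ur4'[simp]: "x \<le> k \<Longrightarrow> (memT k s u tv)(20 + 6 * x := v) = memT k (s\<lparr>sF := (sF s)(x := v)\<rparr>) u tv"
  using memT_ur4[of x s u tv v] by (simp add: add.commute)
lemma memT_r5'[simp]: "x \<le> k \<Longrightarrow> memT k s u tv (21 + 6 * x) = sC s x"
  using memT_r5[of x s u tv] by (simp add: add.commute)
lemma memT_ur5'[simp]: "x \<le> k \<Longrightarrow> (memT k s u tv)(21 + 6 * x := v) = memT k (s\<lparr>sC := (sC s)(x := v)\<rparr>) u tv"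
  using memT_ur5[of x s u tv v] by (simp add: add.commute)

lemma memT_s0a[simp]: "Suc x \<le> k \<Longrightarrow> memT k s u tv (22 + 6 * x) = sLast s (Suc x)"
  using memT_r0[of "Suc x" s u tv] by (simp add: algebra_simps)
lemma memT_us0a[simp]: "Suc x \<le> k \<Longrightarrow> (memT k s u tv)(22 + 6 * x := v) = memT k (s\<lparr>sLast := (sLast s)(Suc x := v)\<rparr>) u tv"
  using memT_ur0[of "Suc x" s u tv v] by (simp add: algebra_simps)
lemma memT_s0b[simp]: "Suc x \<le> k \<Longrightarrow> memT k s u tv (6 * x + 22) = sLast s (Suc x)"
  using memT_r0[of "Suc x" s u tv] by (simp add: algebra_simps)
lemma memT_us0b[simp]: "Suc x \<le> k \<Longrightarrow> (memT k s u tv)(6 * x + 22 := v) = memT k (s\<lparr>sLast := (sLast s)(Suc x := v)\<rparr>) u tv"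
  using memT_ur0[of "Suc x" s u tv v] by (simp add: algebra_simps)
lemma memT_n0[simp]: "memT k s u tv 16 = sLast s 0"
  using memT_r0[of 0 s u tv] by simp
lemma memT_un0[simp]: "(memT k s u tv)(16 := v) = memT k (s\<lparr>sLast := (sLast s)(0 := v)\<rparr>) u tv"
  using memT_ur0[of 0 s u tv v] by simp
lemma memT_m0[simp]: "Suc 0 \<le> k \<Longrightarrow> memT k s u tv 22 = sLast s (Suc 0)"
  using memT_r0[of "Suc 0" s u tv] by simp
lemma memT_um0[simp]: "Suc 0 \<le> k \<Longrightarrow> (memT k s u tv)(22 := v) = memT k (s\<lparr>sLast := (sLast s)(Suc 0 := v)\<rparr>) u tv"
  using memT_ur0[of "Suc 0" s u tv v] by simp
lemma memT_s1a[simp]: "Suc x \<le> k \<Longrightarrow> memT k s u tv (23 + 6 * x) = sFirst s (Suc x)"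
  using memT_r1[of "Suc x" s u tv] by (simp add: algebra_simps)
lemma memT_us1a[simp]: "Suc x \<le> k \<Longrightarrow> (memT k s u tv)(23 + 6 * x := v) = memT k (s\<lparr>sFirst := (sFirst s)(Suc x := v)\<rparr>) u tv"
  using memT_ur1[of "Suc x" s u tv v] by (simp add: algebra_simps)
lemma memT_s1b[simp]: "Suc x \<le> k \<Longrightarrow> memT k s u tv (6 * x + 23) = sFirst s (Suc x)"
  using memT_r1[of "Suc x" s u tv] by (simp add: algebra_simps)
lemma memT_us1b[simp]: "Suc x \<le> k \<Longrightarrow> (memT k s u tv)(6 * x + 23 := v) = memT k (s\<lparr>sFirst := (sFirst s)(Suc x := v)\<rparr>) u tv"
  using memT_ur1[of "Suc x" s u tv v] by (simp add: algebra_simps)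
lemma memT_n1[simp]: "memT k s u tv 17 = sFirst s 0"
  using memT_r1[of 0 s u tv] by simp
lemma memT_un1[simp]: "(memT k s u tv)(17 := v) = memT k (s\<lparr>sFirst := (sFirst s)(0 := v)\<rparr>) u tv"
  using memT_ur1[of 0 s u tv v] by simp
lemma memT_m1[simp]: "Suc 0 \<le> k \<Longrightarrow> memT k s u tv 23 = sFirst s (Suc 0)"
  using memT_r1[of "Suc 0" s u tv] by simp
lemma memT_um1[simp]: "Suc 0 \<le> k \<Longrightarrow> (memT k s u tv)(23 := v) = memT k (s\<lparr>sFirst := (sFirst s)(Suc 0 := v)\<rparr>) u tv"
  using memT_ur1[of "Suc 0" s u tv v] by simp
lemma memT_s2a[simp]: "Suc x \<le> k \<Longrightarrow> memT k s u tv (24 + 6 * x) = sSucc s (Suc x)"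
  using memT_r2[of "Suc x" s u tv] by (simp add: algebra_simps)
lemma memT_us2a[simp]: "Suc x \<le> k \<Longrightarrow> (memT k s u tv)(24 + 6 * x := v) = memT k (s\<lparr>sSucc := (sSucc s)(Suc x := v)\<rparr>) u tv"
  using memT_ur2[of "Suc x" s u tv v] by (simp add: algebra_simps)
lemma memT_s2b[simp]: "Suc x \<le> k \<Longrightarrow> memT k s u tv (6 * x + 24) = sSucc s (Suc x)"
  using memT_r2[of "Suc x" s u tv] by (simp add: algebra_simps)
lemma memT_us2b[simp]: "Suc x \<le> k \<Longrightarrow> (memT k s u tv)(6 * x + 24 := v) = memT k (s\<lparr>sSucc := (sSucc s)(Suc x := v)\<rparr>) u tv"
  using memT_ur2[of "Suc x" s u tv v] by (simp add: algebra_simps)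
lemma memT_n2[simp]: "memT k s u tv 18 = sSucc s 0"
  using memT_r2[of 0 s u tv] by simp
lemma memT_un2[simp]: "(memT k s u tv)(18 := v) = memT k (s\<lparr>sSucc := (sSucc s)(0 := v)\<rparr>) u tv"
  using memT_ur2[of 0 s u tv v] by simp
lemma memT_m2[simp]: "Suc 0 \<le> k \<Longrightarrow> memT k s u tv 24 = sSucc s (Suc 0)"
  using memT_r2[of "Suc 0" s u tv] by simp
lemma memT_um2[simp]: "Suc 0 \<le> k \<Longrightarrow> (memT k s u tv)(24 := v) = memT k (s\<lparr>sSucc := (sSucc s)(Suc 0 := v)\<rparr>) u tv"
  using memT_ur2[of "Suc 0" s u tv v] by simp
lemma memT_s3a[simp]: "Suc x \<le> k \<Longrightarrow> memT k s u tv (25 + 6 * x) = sHx s (Suc x)"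
  using memT_r3[of "Suc x" s u tv] by (simp add: algebra_simps)
lemma memT_us3a[simp]: "Suc x \<le> k \<Longrightarrow> (memT k s u tv)(25 + 6 * x := v) = memT k (s\<lparr>sHx := (sHx s)(Suc x := v)\<rparr>) u tv"
  using memT_ur3[of "Suc x" s u tv v] by (simp add: algebra_simps)
lemma memT_s3b[simp]: "Suc x \<le> k \<Longrightarrow> memT k s u tv (6 * x + 25) = sHx s (Suc x)"
  using memT_r3[of "Suc x" s u tv] by (simp add: algebra_simps)
lemma memT_us3b[simp]: "Suc x \<le> k \<Longrightarrow> (memT k s u tv)(6 * x + 25 := v) = memT k (s\<lparr>sHx := (sHx s)(Suc x := v)\<rparr>) u tv"
  using memT_ur3[of "Suc x" s u tv v] by (simp add: algebra_simps)
lemma memT_n3[simp]: "memT k s u tv 19 = sHx s 0"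
  using memT_r3[of 0 s u tv] by simp
lemma memT_un3[simp]: "(memT k s u tv)(19 := v) = memT k (s\<lparr>sHx := (sHx s)(0 := v)\<rparr>) u tv"
  using memT_ur3[of 0 s u tv v] by simp
lemma memT_m3[simp]: "Suc 0 \<le> k \<Longrightarrow> memT k s u tv 25 = sHx s (Suc 0)"
  using memT_r3[of "Suc 0" s u tv] by simp
lemma memT_um3[simp]: "Suc 0 \<le> k \<Longrightarrow> (memT k s u tv)(25 := v) = memT k (s\<lparr>sHx := (sHx s)(Suc 0 := v)\<rparr>) u tv"
  using memT_ur3[of "Suc 0" s u tv v] by simp
lemma memT_s4a[simp]: "Suc x \<le> k \<Longrightarrow> memT k s u tv (26 + 6 * x) = sF s (Suc x)"
  using memT_r4[of "Suc x" s u tv] by (simp add: algebra_simps)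
lemma memT_us4a[simp]: "Suc x \<le> k \<Longrightarrow> (memT k s u tv)(26 + 6 * x := v) = memT k (s\<lparr>sF := (sF s)(Suc x := v)\<rparr>) u tv"
  using memT_ur4[of "Suc x" s u tv v] by (simp add: algebra_simps)
lemma memT_s4b[simp]: "Suc x \<le> k \<Longrightarrow> memT k s u tv (6 * x + 26) = sF s (Suc x)"
  using memT_r4[of "Suc x" s u tv] by (simp add: algebra_simps)
lemma memT_us4b[simp]: "Suc x \<le> k \<Longrightarrow> (memT k s u tv)(6 * x + 26 := v) = memT k (s\<lparr>sF := (sF s)(Suc x := v)\<rparr>) u tv"
  using memT_ur4[of "Suc x" s u tv v] by (simp add: algebra_simps)
lemma memT_n4[simp]: "memT k s u tv 20 = sF s 0"
  using memT_r4[of 0 s u tv] by simp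
lemma memT_un4[simp]: "(memT k s u tv)(20 := v) = memT k (s\<lparr>sF := (sF s)(0 := v)\<rparr>) u tv"
  using memT_ur4[of 0 s u tv v] by simp
lemma memT_m4[simp]: "Suc 0 \<le> k \<Longrightarrow> memT k s u tv 26 = sF s (Suc 0)"
  using memT_r4[of "Suc 0" s u tv] by simp
lemma memT_um4[simp]: "Suc 0 \<le> k \<Longrightarrow> (memT k s u tv)(26 := v) = memT k (s\<lparr>sF := (sF s)(Suc 0 := v)\<rparr>) u tv"
  using memT_ur4[of "Suc 0" s u tv v] by simp
lemma memT_s5a[simp]: "Suc x \<le> k \<Longrightarrow> memT k s u tv (27 + 6 * x) = sC s (Suc x)"
  using memT_r5[of "Suc x" s u tv] by (simp add: algebra_simps)
lemma memT_us5a[simp]: "Suc x \<le> k \<Longrightarrow> (memT k s u tv)(27 + 6 * x := v) = memT k (s\<lparr>sC := (sC s)(Suc x := v)\<rparr>) u tv"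
  using memT_ur5[of "Suc x" s u tv v] by (simp add: algebra_simps)
lemma memT_s5b[simp]: "Suc x \<le> k \<Longrightarrow> memT k s u tv (6 * x + 27) = sC s (Suc x)"
  using memT_r5[of "Suc x" s u tv] by (simp add: algebra_simps)
lemma memT_us5b[simp]: "Suc x \<le> k \<Longrightarrow> (memT k s u tv)(6 * x + 27 := v) = memT k (s\<lparr>sC := (sC s)(Suc x := v)\<rparr>) u tv"
  using memT_ur5[of "Suc x" s u tv v] by (simp add: algebra_simps)
lemma memT_n5[simp]: "memT k s u tv 21 = sC s 0"
  using memT_r5[of 0 s u tv] by simp
lemma memT_un5[simp]: "(memT k s u tv)(21 := v) = memT k (s\<lparr>sC := (sC s)(0 := v)\<rparr>) u tv"
  using memT_ur5[of 0 s u tv v] by simp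
lemma memT_m5[simp]: "Suc 0 \<le> k \<Longrightarrow> memT k s u tv 27 = sC s (Suc 0)"
  using memT_r5[of "Suc 0" s u tv] by simp
lemma memT_um5[simp]: "Suc 0 \<le> k \<Longrightarrow> (memT k s u tv)(27 := v) = memT k (s\<lparr>sC := (sC s)(Suc 0 := v)\<rparr>) u tv"
  using memT_ur5[of "Suc 0" s u tv v] by simp

definition eb :: "nat \<Rightarrow> st \<Rightarrow> bool" where
  "eb V s \<longleftrightarrow> k \<le> V \<and> sAmb s \<le> V \<and> sJ s \<le> V \<and> sP s \<le> V \<and> sH s \<le> V \<and>
    (\<forall>y\<le>k. sLast s y \<le> V \<and> sFirst s y \<le> V \<and> sSucc s y \<le> V \<and> sHx s y \<le> V \<and> sF s y \<le> V \<and> sC s y \<le> V)"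

lemma bnd_enc[simp]: "eb V s \<Longrightarrow> bnd V (enc k s)"
  unfolding bnd_def
proof
  fix a assume e: "eb V s"
  show "enc k s a \<le> V"
  proof (cases "16 \<le> a \<and> a < 22 + 6 * k")
    case True
    then have "(a - 16) div 6 \<le> k" by auto
    then show ?thesis using e unfolding enc_def eb_def fld_def by auto
  next
    case False then show ?thesis using e unfolding enc_def eb_def by auto
  qed
qed

lemma bnd_memT[simp]: "eb V s \<Longrightarrow> u \<le> V \<Longrightarrow> tb V tv \<Longrightarrow> bnd V (memT k s u tv)"
  using bnd_enc unfolding bnd_def tb_def memT_def by auto

lemma eb_upd[simp]:
  "eb V s \<Longrightarrow> v \<le> V \<Longrightarrow> eb V (s\<lparr>sAmb := v\<rparr>)"
  "eb V s \<Longrightarrow> v \<le> V \<Longrightarrow> eb V (s\<lparr>sJ := v\<rparr>)"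
  "eb V s \<Longrightarrow> v \<le> V \<Longrightarrow> eb V (s\<lparr>sP := v\<rparr>)"
  "eb V s \<Longrightarrow> v \<le> V \<Longrightarrow> eb V (s\<lparr>sH := v\<rparr>)"
  "eb V s \<Longrightarrow> \<forall>y\<le>k. f y \<le> V \<Longrightarrow> eb V (s\<lparr>sLast := f\<rparr>)"
  "eb V s \<Longrightarrow> \<forall>y\<le>k. f y \<le> V \<Longrightarrow> eb V (s\<lparr>sFirst := f\<rparr>)"
  "eb V s \<Longrightarrow> \<forall>y\<le>k. f y \<le> V \<Longrightarrow> eb V (s\<lparr>sSucc := f\<rparr>)"
  "eb V s \<Longrightarrow> \<forall>y\<le>k. f y \<le> V \<Longrightarrow> eb V (s\<lparr>sHx := f\<rparr>)"
  "eb V s \<Longrightarrow> \<forall>y\<le>k. f y \<le> V \<Longrightarrow> eb V (s\<lparr>sF := f\<rparr>)"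
  "eb V s \<Longrightarrow> \<forall>y\<le>k. f y \<le> V \<Longrightarrow> eb V (s\<lparr>sC := f\<rparr>)"
  unfolding eb_def by auto

lemma eb_rd[simp]:
  "eb V s \<Longrightarrow> k \<le> V" "eb V s \<Longrightarrow> sAmb s \<le> V" "eb V s \<Longrightarrow> sJ s \<le> V"
  "eb V s \<Longrightarrow> sP s \<le> V" "eb V s \<Longrightarrow> sH s \<le> V"
  "eb V s \<Longrightarrow> x \<le> k \<Longrightarrow> sLast s x \<le> V"
  "eb V s \<Longrightarrow> x \<le> k \<Longrightarrow> sFirst s x \<le> V"
  "eb V s \<Longrightarrow> x \<le> k \<Longrightarrow> sSucc s x \<le> V"
  "eb V s \<Longrightarrow> x \<le> k \<Longrightarrow> sHx s x \<le> V"
  "eb V s \<Longrightarrow> x \<le> k \<Longrightarrow> sF s x \<le> V"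
  "eb V s \<Longrightarrow> x \<le> k \<Longrightarrow> sC s x \<le> V"
  unfolding eb_def by auto

lemma memT_clean[simp]: "tv 6 = 0 \<Longrightarrow> tv 7 = 0 \<Longrightarrow> tv 8 = 0 \<Longrightarrow> tv 9 = 0 \<Longrightarrow> tv 10 = 0 \<Longrightarrow>
  tv 11 = 0 \<Longrightarrow> tv 12 = 0 \<Longrightarrow> tv 13 = 0 \<Longrightarrow> tv 14 = 0 \<Longrightarrow> tv 15 = 0 \<Longrightarrow> memT k s 0 tv = enc k s"
proof (rule ext)
  fix a assume "tv 6 = 0" "tv 7 = 0" "tv 8 = 0" "tv 9 = 0" "tv 10 = 0" "tv 11 = 0" "tv 12 = 0" "tv 13 = 0" "tv 14 = 0" "tv 15 = 0"
  moreover have "6 \<le> (a::nat) \<Longrightarrow> a \<le> 15 \<Longrightarrow> a = 6 \<or> a = 7 \<or> a = 8 \<or> a = 9 \<or> a = 10 \<or> a = 11 \<or> a = 12 \<or> a = 13 \<or> a = 14 \<or> a = 15" by presburger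
  ultimately show "memT k s 0 tv a = enc k s a" unfolding memT_def enc_def by auto
qed

end

context fixes k :: nat begin
lemma blockQ:
  assumes "u < k" "sH s \<le> k" "eb k V s" "tb V tv" "22 + 6*k \<le> S" "22 + 6*k \<le> V"
  shows "wp Pstep S V 70 (memT k s u tv) (\<lambda>t m. m = enc k (query s u) \<and> t \<le> 70)"
  using assms
  apply -
  apply ((((rule conjI impI)+)?, rule wp_unfold, simp) | (auto simp: query_def upd_def dead_def Let_def; fail))+
  done
end

context fixes k :: nat begin

definition LP :: "nat \<Rightarrow> st \<Rightarrow> nat \<Rightarrow> nat \<Rightarrow> nat \<Rightarrow> (nat \<Rightarrow> nat) \<Rightarrow> bool" where
  "LP V s u f c m \<longleftrightarrow> m = memT k s u m \<and> bnd V m \<and> m 8 = f \<and> m 13 = c"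

lemma memT_idem[simp]: "memT k s u (memT k s u tv) = memT k s u tv"
  by (rule ext) (simp add: memT_def)

lemma tb_bnd: "bnd V m \<Longrightarrow> tb V m" unfolding bnd_def tb_def by auto

lemma LP_intro: "s1 = s2 \<Longrightarrow> eb k V s1 \<Longrightarrow> u \<le> V \<Longrightarrow> tb V tv \<Longrightarrow> tv 8 = f \<Longrightarrow> tv 13 = c \<Longrightarrow>
   LP V s2 u f c (memT k s1 u tv)"
  unfolding LP_def by simp

lemma LP_elim: "LP V s u f c m \<Longrightarrow> m = memT k s u m \<and> tb V m \<and> m 8 = f \<and> m 13 = c"
  unfolding LP_def using tb_bnd by auto

lemma loopL:
  assumes "sH s \<le> k" "eb k V s" "LP V s u f c m" "u < k" "22 + 6*k \<le> S" "22 + 6*k \<le> V"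
   and cont: "\<And>m'. LP V (s\<lparr>sH := fst (mloop (sF s) (sC s) (sH s) f)\<rparr>) u (snd (mloop (sF s) (sC s) (sH s) f)) c m' \<Longrightarrow>
      wp Pstep S V 51 m' (\<lambda>t m. m = M \<and> t + 23 * (sH s - fst (mloop (sF s) (sC s) (sH s) f)) + 14 + D \<le> B)"
  shows "wp Pstep S V 26 m (\<lambda>t m. m = M \<and> t + D \<le> B)"
  using assms
proof (induction "sH s" arbitrary: s f m D)
  case 0
  obtain tv where m: "m = memT k s u tv" "tb V tv" "tv 8 = f" "tv 13 = c" using LP_elim[OF 0(4)] by blast
  have ss: "s\<lparr>sH := 0\<rparr> = s" using 0(1) by simp
  have c: "wp Pstep S V 51 (memT k s u tv) (\<lambda>t m. m = M \<and> t + 14 + D \<le> B)"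
    using 0(8)[of "memT k s u tv"] 0(1)[symmetric] 0(4) m by (simp add: ss)
  show ?case unfolding m(1)
    apply (rule wp_unfold)
    using 0(1)[symmetric] 0(3) 0(5) 0(6) 0(7) m
    apply simp
    apply (rule wp_mono[OF c])
    by simp
next
  case (Suc n)
  obtain tv where m: "m = memT k s u tv" "tb V tv" "tv 8 = f" "tv 13 = c" using LP_elim[OF Suc(5)] by blast
  define f' where "f' = (if sF s (Suc n) \<le> f then sF s (Suc n) else f)"
  have hS: "sH s = Suc n" using Suc(2) by simp
  have fV: "f \<le> V" using m(2,3) unfolding tb_def by auto
  show ?case
  proof (rule wpto_wp[where stops="{26,51}" and R="\<lambda>t pc m'. (pc = 26 \<longrightarrow> t \<le> 23 \<and> f \<le> sC s (Suc n) \<and> LP V (s\<lparr>sH := n\<rparr>) u f' c m') \<and>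
         (pc = 51 \<longrightarrow> t \<le> 14 \<and> \<not> f \<le> sC s (Suc n) \<and> LP V s u f c m')"])
    show "wpto Pstep S V {26, 51} 26 m (\<lambda>t pc m'. (pc = 26 \<longrightarrow> t \<le> 23 \<and> f \<le> sC s (Suc n) \<and> LP V (s\<lparr>sH := n\<rparr>) u f' c m') \<and>
         (pc = 51 \<longrightarrow> t \<le> 14 \<and> \<not> f \<le> sC s (Suc n) \<and> LP V s u f c m'))"
      unfolding m(1) f'_def
      using hS Suc(3) Suc(4) Suc(6) Suc(7) Suc(8) m(2,3,4) fV
      apply -
      apply (rule wpto_first, simp)
      apply ((((rule conjI impI)+)?, rule wpto_unfold, simp) | (auto intro!: LP_intro; fail))+
      done
  next
    fix t pc' :: nat and m' :: "nat \<Rightarrow> nat"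
    assume pc': "pc' \<in> {26, 51}" and R: "(pc' = 26 \<longrightarrow> t \<le> 23 \<and> f \<le> sC s (Suc n) \<and> LP V (s\<lparr>sH := n\<rparr>) u f' c m') \<and>
         (pc' = 51 \<longrightarrow> t \<le> 14 \<and> \<not> f \<le> sC s (Suc n) \<and> LP V s u f c m')"
    show "wp Pstep S V pc' m' (\<lambda>t' m. m = M \<and> t + t' + D \<le> B)"
    proof (cases "pc' = 26")
      case True
      then have R1: "t \<le> 23" "f \<le> sC s (Suc n)" "LP V (s\<lparr>sH := n\<rparr>) u f' c m'" using R by auto
      have ml: "mloop (sF s) (sC s) (Suc n) f = mloop (sF s) (sC s) n f'"
        using mloop_pop[of "Suc n" f "sC s" "sF s"] R1(2) unfolding f'_def by simp
      have le: "fst (mloop (sF s) (sC s) n f') \<le> n" by (rule mloop_le)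
      have IH: "wp Pstep S V 26 m' (\<lambda>t' m. m = M \<and> t' + (t + D) \<le> B)"
      proof (rule Suc(1)[of "s\<lparr>sH := n\<rparr>"])
        show "n = sH (s\<lparr>sH := n\<rparr>)" by simp
        show "sH (s\<lparr>sH := n\<rparr>) \<le> k" using Suc(3) hS by simp
        have "sH s \<le> V" using Suc(4) by simp
        then show "eb k V (s\<lparr>sH := n\<rparr>)" using Suc(4) hS by simp
        show "LP V (s\<lparr>sH := n\<rparr>) u f' c m'" by (rule R1(3))
        show "u < k" "22 + 6 * k \<le> S" "22 + 6 * k \<le> V" by fact+
        fix m'' assume L: "LP V (s\<lparr>sH := n, sH := fst (mloop (sF (s\<lparr>sH := n\<rparr>)) (sC (s\<lparr>sH := n\<rparr>)) (sH (s\<lparr>sH := n\<rparr>)) f')\<rparr>) u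
               (snd (mloop (sF (s\<lparr>sH := n\<rparr>)) (sC (s\<lparr>sH := n\<rparr>)) (sH (s\<lparr>sH := n\<rparr>)) f')) c m''"
        have "wp Pstep S V 51 m'' (\<lambda>t m. m = M \<and> t + 23 * (sH s - fst (mloop (sF s) (sC s) (sH s) f)) + 14 + D \<le> B)"
          using Suc(9)[of m''] L ml hS by simp
        then show "wp Pstep S V 51 m'' (\<lambda>ta m. m = M \<and> ta + 23 * (sH (s\<lparr>sH := n\<rparr>) - fst (mloop (sF (s\<lparr>sH := n\<rparr>)) (sC (s\<lparr>sH := n\<rparr>)) (sH (s\<lparr>sH := n\<rparr>)) f')) + 14 + (t + D) \<le> B)"
          by (rule wp_mono) (use ml hS le R1(1) in auto)
      qed
      show ?thesis using True by (rule ssubst) (rule wp_mono[OF IH], simp)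
    next
      case False
      then have p51: "pc' = 51" using pc' by auto
      then have R1: "t \<le> 14" "\<not> f \<le> sC s (Suc n)" "LP V s u f c m'" using R by auto
      have ml: "mloop (sF s) (sC s) (Suc n) f = (Suc n, f)"
        using mloop_stop[of "Suc n" f "sC s" "sF s"] R1(2) by simp
      have ss: "s\<lparr>sH := Suc n\<rparr> = s" using hS by simp
      have "wp Pstep S V 51 m' (\<lambda>t m. m = M \<and> t + 23 * (sH s - fst (mloop (sF s) (sC s) (sH s) f)) + 14 + D \<le> B)"
        using Suc(9)[of m'] R1(3) ml hS ss by simp
      then show ?thesis unfolding p51 by (rule wp_mono) (use ml hS R1(1) in auto)
    qed
  qed
qed
end

context fixes k :: nat begin

definition QP :: "nat \<Rightarrow> st \<Rightarrow> nat \<Rightarrow> (nat \<Rightarrow> nat) \<Rightarrow> bool" where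
  "QP V s u m \<longleftrightarrow> m = memT k s u m \<and> bnd V m"

lemma QP_intro: "s1 = s2 \<Longrightarrow> eb k V s1 \<Longrightarrow> u \<le> V \<Longrightarrow> tb V tv \<Longrightarrow> QP V s2 u (memT k s1 u tv)"
  unfolding QP_def by simp

lemma QP_elim: "QP V s u m \<Longrightarrow> m = memT k s u m \<and> tb V m"
  unfolding QP_def using tb_bnd by auto

lemma blockQ':
  assumes "u < k" "sH s \<le> k" "eb k V s" "QP V s u m" "22 + 6*k \<le> S" "22 + 6*k \<le> V" "70 + D \<le> B"
  shows "wp Pstep S V 70 m (\<lambda>t m. m = enc k (query s u) \<and> t + D \<le> B)"
proof -
  have m: "m = memT k s u m" "tb V m" using QP_elim[OF assms(4)] by auto
  show ?thesis
    apply (subst m(1))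
    apply (rule wp_mono[OF blockQ[OF assms(1,2,3) m(2) assms(5,6)]])
    using assms(7) by auto
qed

lemma blockPush:
  assumes "u < k" "Suc h \<le> k" "eb k V s" "LP k V (s\<lparr>sH := h\<rparr>) u f c m" "f \<le> V" "c \<le> V"
    "22 + 6*k \<le> S" "22 + 6*k \<le> V" "88 + D \<le> B"
    "s' = s\<lparr>sH := Suc h, sF := (sF s)(Suc h := f), sC := (sC s)(Suc h := c)\<rparr>"
  shows "wp Pstep S V 51 m (\<lambda>t m. m = enc k (query s' u) \<and> t + D \<le> B)"
proof -
  obtain tv where m: "m = memT k (s\<lparr>sH := h\<rparr>) u tv" "tb V tv" "tv 8 = f" "tv 13 = c" using LP_elim[OF assms(4)] by blast
  have hV: "Suc h \<le> V" using assms(2,8) by simp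
  show ?thesis
  proof (rule wpto_wp[where stops="{70}" and R="\<lambda>t pc m'. t \<le> 18 \<and> QP V s' u m'"])
    show "wpto Pstep S V {70} 51 m (\<lambda>t pc m'. t \<le> 18 \<and> QP V s' u m')"
      unfolding m(1) using assms(1,2,3,5,6,7,8,10) m(2,3,4) hV
      apply -
      apply ((((rule conjI impI)+)?, rule wpto_unfold, simp) | (auto intro!: QP_intro; fail))+
      done
  next
    fix t pc' :: nat and m' :: "nat \<Rightarrow> nat" assume "pc' \<in> {70::nat}" "t \<le> 18 \<and> QP V s' u m'"
    then have "wp Pstep S V pc' m' (\<lambda>t' m. m = enc k (query s' u) \<and> t' + (t + D) \<le> B)"
      using blockQ'[of u s' V m' S "t + D" B] assms by simp
    then show "wp Pstep S V pc' m' (\<lambda>t' m. m = enc k (query s' u) \<and> t + t' + D \<le> B)"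
      by (rule wp_mono) auto
  qed
qed

end

lemma mloop_snd_le: "(\<forall>y\<le>h. F y \<le> V) \<Longrightarrow> f \<le> (V::nat) \<Longrightarrow> snd (mloop F C h f) \<le> V"
proof (induction F C h f rule: mloop.induct)
  case (1 F C h f)
  show ?case
  proof (cases "h = 0")
    case True then show ?thesis using 1 by simp
  next
    case False
    show ?thesis
    proof (cases "f \<le> C h")
      case True
      have "snd (mloop F C (h - 1) (if F h \<le> f then F h else f)) \<le> V"
        using 1(1)[OF False True] 1(2,3) by auto
      then show ?thesis using mloop_pop[of h f C F, OF False True] by simp
    next
      case False2: False
      then show ?thesis using mloop_stop[of h f C F, OF False False2] 1 by simp
    qed
  qed
qed

lemma Pstep_1[simp]: "Pstep ! Suc 0 = Jmp 127" by (simp add: Pstep_def)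

context fixes k :: nat begin

lemma eb_dev:
  assumes "eb k V s" "u \<le> V" "sH (dev s u) \<le> k" "sH s \<le> k" "sP s \<le> k"
  shows "eb k V (dev s u)"
proof -
  have kV: "k \<le> V" using assms(1) by simp
  have fV: "sFirst s (sP s) \<le> V" using assms(1,5) by simp
  have FV: "\<forall>y\<le>sH s. sF s y \<le> V" using assms(1,4) by auto
  have m: "snd (mloop (sF s) (sC s) (sH s) (sFirst s (sP s))) \<le> V"
    by (rule mloop_snd_le[OF FV fV])
  have kV': "\<And>x. x \<le> k \<Longrightarrow> x \<le> V" using kV by simp
  show ?thesis using assms kV m unfolding dev_def Let_def by (auto split: if_splits simp: kV')
qed

lemma stepL:
  assumes "u < k" "sH s \<le> k" "sP s \<le> k" "eb k V s" "tb V tv" "22+6*k \<le> S" "22+6*k \<le> V" "Suc (sJ s) \<le> V"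
    "sAmb s = 0 \<Longrightarrow> sH (dev (s\<lparr>sJ := Suc (sJ s)\<rparr>) u) \<le> k"
  shows "wp Pstep S V 0 (memT k s u tv) (\<lambda>t m. m = enc k (absstep s u) \<and> t \<le> 150 + 23 * (sH s + 1 - sH (absstep s u)))"
proof (cases "sAmb s = 0")
  case False
  then show ?thesis using assms unfolding absstep_def
    apply -
    apply ((((rule conjI impI)+)?, rule wp_unfold, simp) | (auto; fail))+
    done
next
  case True
  define s1 where "s1 = s\<lparr>sJ := Suc (sJ s)\<rparr>"
  define p where "p = sP s"
  define f where "f = sFirst s p"
  define B where "B = 150 + 23 * (sH s + 1 - sH (absstep s u))"
  have ab: "absstep s u = query (dev s1 u) u" unfolding absstep_def s1_def using True by simp
  have e1: "eb k V s1" unfolding s1_def using assms(4,8) by simp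
  have hd: "sH (dev s1 u) \<le> k" using assms(9) True unfolding s1_def by simp
  have ed: "eb k V (dev s1 u)"
    by (rule eb_dev[OF e1]) (use assms hd in \<open>auto simp: s1_def\<close>)
  have fV: "f \<le> V" unfolding f_def p_def using assms(3,4) by simp
  have BB: "B = 150 + 23 * (sH s + 1 - sH (dev s1 u))"
    unfolding B_def ab by (simp add: query_def upd_def)
  define R where "R = (\<lambda>t pc m'. (pc = (70::nat) \<longrightarrow> t \<le> (30::nat) \<and> QP k V (dev s1 u) u m') \<and>
     (pc = 26 \<longrightarrow> t \<le> 30 \<and> sJ s1 - 1 \<noteq> 0 \<and> \<not> sJ s1 - 1 \<le> f \<and> sSucc s1 p \<noteq> u \<and> LP k V s1 u f (sJ s) m'))"
  show ?thesis unfolding B_def[symmetric]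
  proof (rule wpto_wp[where stops="{26,70}" and R=R])
    show "wpto Pstep S V {26, 70} 0 (memT k s u tv) R"
      unfolding R_def s1_def f_def p_def using assms True fV[unfolded f_def p_def]
      apply -
      apply ((((rule conjI impI)+)?, rule wpto_unfold, simp) |
         (auto simp: dev_def Let_def intro!: QP_intro LP_intro; fail))+
      done
  next
    fix t pc' :: nat and m' :: "nat \<Rightarrow> nat"
    assume pc': "pc' \<in> {26, 70}" and R: "R t pc' m'"
    show "wp Pstep S V pc' m' (\<lambda>t' m. m = enc k (absstep s u) \<and> t + t' \<le> B)"
    proof (cases "pc' = 70")
      case True
      then have R1: "t \<le> 30" "QP k V (dev s1 u) u m'" using R unfolding R_def by auto
      have "wp Pstep S V 70 m' (\<lambda>t2 m. m = enc k (query (dev s1 u) u) \<and> t2 + t \<le> B)"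
        by (rule blockQ'[OF assms(1) hd ed R1(2) assms(6,7)]) (use R1(1) in \<open>simp add: B_def\<close>)
      then show ?thesis unfolding True ab by (rule wp_mono) auto
    next
      case False
      then have p26: "pc' = 26" using pc' by auto
      then have R1: "t \<le> 30" "sJ s1 - 1 \<noteq> 0" "\<not> sJ s1 - 1 \<le> f" "sSucc s1 p \<noteq> u" "LP k V s1 u f (sJ s) m'"
        using R unfolding R_def by auto
      define h' where "h' = fst (mloop (sF s1) (sC s1) (sH s1) f)"
      define f' where "f' = snd (mloop (sF s1) (sC s1) (sH s1) f)"
      have dv: "dev s1 u = s1\<lparr>sH := Suc h', sF := (sF s1)(Suc h' := f'), sC := (sC s1)(Suc h' := sJ s)\<rparr>"
        using R1(2,3,4) unfolding dev_def h'_def f'_def f_def p_def Let_def s1_def by simp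
      have hk: "Suc h' \<le> k" using hd dv by simp
      have hle: "h' \<le> sH s" unfolding h'_def s1_def using mloop_le by simp
      have f'V: "f' \<le> V" unfolding f'_def
        by (rule mloop_snd_le) (use assms(4) assms(2) fV in \<open>auto simp: s1_def\<close>)
      have BB2: "B = 150 + 23 * (sH s - h')" using BB dv by simp
      have "wp Pstep S V 26 m' (\<lambda>t' m. m = enc k (absstep s u) \<and> t' + t \<le> B)"
      proof (rule loopL[where s=s1 and f=f and c="sJ s" and u=u, OF _ e1 R1(5) assms(1,6,7)])
        show "sH s1 \<le> k" using assms(2) by (simp add: s1_def)
        fix m'' assume L: "LP k V (s1\<lparr>sH := fst (mloop (sF s1) (sC s1) (sH s1) f)\<rparr>) u (snd (mloop (sF s1) (sC s1) (sH s1) f)) (sJ s) m''"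
        have "wp Pstep S V 51 m'' (\<lambda>t2 m. m = enc k (query (dev s1 u) u) \<and> t2 + (23 * (sH s1 - h') + 14 + t) \<le> B)"
          by (rule blockPush[OF assms(1) hk e1 L[folded h'_def f'_def] f'V _ assms(6,7) _ dv])
             (use assms(4) R1(1) BB2 in \<open>auto simp: s1_def\<close>)
        then show "wp Pstep S V 51 m'' (\<lambda>ta m. m = enc k (absstep s u) \<and> ta + 23 * (sH s1 - fst (mloop (sF s1) (sC s1) (sH s1) f)) + 14 + t \<le> B)"
          unfolding ab h'_def by (rule wp_mono) auto
      qed
      then show ?thesis unfolding p26 by (rule wp_mono) auto
    qed
  qed
qed
end

definition Srt :: "(nat \<Rightarrow> nat) \<Rightarrow> (nat \<Rightarrow> nat) \<Rightarrow> nat \<Rightarrow> bool" where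
  "Srt F C h \<longleftrightarrow> (\<forall>i. 1 \<le> i \<and> i \<le> h \<longrightarrow> 1 \<le> F i \<and> F i \<le> C i) \<and> (\<forall>i. 1 \<le> i \<and> i < h \<longrightarrow> C i < F (Suc i))"

definition covS :: "(nat \<Rightarrow> nat) \<Rightarrow> (nat \<Rightarrow> nat) \<Rightarrow> nat \<Rightarrow> nat \<Rightarrow> bool" where
  "covS F C h q \<longleftrightarrow> (\<exists>i. 1 \<le> i \<and> i \<le> h \<and> F i \<le> q \<and> q \<le> C i)"

definition Tinv :: "(nat \<Rightarrow> nat) \<Rightarrow> (nat \<Rightarrow> nat) \<Rightarrow> nat \<Rightarrow> nat \<Rightarrow> nat \<Rightarrow> bool" where
  "Tinv F C h q hx \<longleftrightarrow> hx \<le> h \<and> (hx \<noteq> 0 \<longrightarrow> C hx < q) \<and> (hx < h \<longrightarrow> q < F (Suc hx))"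

lemma Srt_mono: "Srt F C h \<Longrightarrow> 1 \<le> i \<Longrightarrow> i < j \<Longrightarrow> j \<le> h \<Longrightarrow> C i < F j"
proof (induction j)
  case 0 then show ?case by simp
next
  case (Suc j)
  show ?case
  proof (cases "i = j")
    case True then show ?thesis using Suc.prems unfolding Srt_def by auto
  next
    case False
    then have "C i < F j" using Suc by auto
    moreover have "F j \<le> C j" "C j < F (Suc j)" using Suc.prems False unfolding Srt_def by auto
    ultimately show ?thesis by simp
  qed
qed

lemma Srt_C_mono: assumes "Srt F C h" "1 \<le> i" "i \<le> j" "j \<le> h" shows "C i \<le> C j"
proof (cases "i = j")
  case False
  then have "C i < F j" using Srt_mono[OF assms(1,2) _ assms(4)] assms(3) by simp
  moreover have "F j \<le> C j" using assms unfolding Srt_def by auto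
  ultimately show ?thesis by simp
qed simp

lemma Srt_F_mono: "Srt F C h \<Longrightarrow> 1 \<le> i \<Longrightarrow> i \<le> j \<Longrightarrow> j \<le> h \<Longrightarrow> F i \<le> F j"
  using Srt_mono[of F C h i j] unfolding Srt_def by (cases "i = j") auto

lemma Srt_less: "Srt F C h \<Longrightarrow> h' \<le> h \<Longrightarrow> Srt F C h'"
  unfolding Srt_def by auto

lemma mloop_props:
  assumes "Srt F C h"
  shows "fst (mloop F C h f) \<le> h \<and>
    (fst (mloop F C h f) \<noteq> 0 \<longrightarrow> C (fst (mloop F C h f)) < snd (mloop F C h f)) \<and>
    (\<forall>i. fst (mloop F C h f) < i \<and> i \<le> h \<longrightarrow> f \<le> C i) \<and>
    snd (mloop F C h f) \<le> f \<and>
    (fst (mloop F C h f) < h \<longrightarrow> snd (mloop F C h f) = min f (F (Suc (fst (mloop F C h f))))) \<and>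
    (fst (mloop F C h f) = h \<longrightarrow> snd (mloop F C h f) = f)"
  using assms
proof (induction F C h f rule: mloop.induct)
  case (1 F C h f)
  show ?case
  proof (cases "h = 0")
    case True then show ?thesis by simp
  next
    case hne: False
    show ?thesis
    proof (cases "f \<le> C h")
      case True
      define f1 where "f1 = (if F h \<le> f then F h else f)"
      have ml: "mloop F C h f = mloop F C (h - 1) f1"
        using mloop_pop[of h f C F, OF hne True] unfolding f1_def by simp
      have S1: "Srt F C (h - 1)" using 1(2) Srt_less by auto
      have IH: "fst (mloop F C (h - 1) f1) \<le> h - 1 \<and>
        (fst (mloop F C (h - 1) f1) \<noteq> 0 \<longrightarrow> C (fst (mloop F C (h - 1) f1)) < snd (mloop F C (h - 1) f1)) \<and>
        (\<forall>i. fst (mloop F C (h - 1) f1) < i \<and> i \<le> h - 1 \<longrightarrow> f1 \<le> C i) \<and>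
        snd (mloop F C (h - 1) f1) \<le> f1 \<and>
        (fst (mloop F C (h - 1) f1) < h - 1 \<longrightarrow> snd (mloop F C (h - 1) f1) = min f1 (F (Suc (fst (mloop F C (h - 1) f1))))) \<and>
        (fst (mloop F C (h - 1) f1) = h - 1 \<longrightarrow> snd (mloop F C (h - 1) f1) = f1)"
        using 1(1)[OF hne True S1] unfolding f1_def by simp
      define h' where "h' = fst (mloop F C (h - 1) f1)"
      define f' where "f' = snd (mloop F C (h - 1) f1)"
      note IH = IH[folded h'_def f'_def]
      have f1f: "f1 \<le> f" unfolding f1_def by auto
      have popped: "f1 = f" if "h' < h - 1"
      proof -
        have "f1 \<le> C (h - 1)" using IH that by auto
        moreover have "C (h - 1) < F h" using Srt_mono[OF 1(2), of "h - 1" h] that by auto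
        ultimately show ?thesis unfolding f1_def by auto
      qed
      have P3: "\<forall>i. h' < i \<and> i \<le> h \<longrightarrow> f \<le> C i"
      proof (intro allI impI)
        fix i assume i: "h' < i \<and> i \<le> h"
        show "f \<le> C i"
        proof (cases "i = h")
          case True then show ?thesis using \<open>f \<le> C h\<close> by simp
        next
          case False
          then have "h' < h - 1" using i by auto
          then show ?thesis using popped IH i False by auto
        qed
      qed
      have P5: "h' < h \<longrightarrow> f' = min f (F (Suc h'))"
      proof
        assume "h' < h"
        show "f' = min f (F (Suc h'))"
        proof (cases "h' < h - 1")
          case True then show ?thesis using IH popped by auto
        next
          case False
          then have "h' = h - 1" using \<open>h' < h\<close> by auto
          then show ?thesis using IH hne unfolding f1_def by auto
        qed
      qed
      have I1: "h' \<le> h - 1" using IH by blast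
      have A1: "h' \<le> h" using I1 by simp
      have A2: "h' \<noteq> 0 \<longrightarrow> C h' < f'" using IH by blast
      have I4: "f' \<le> f1" using IH by blast
      have A4: "f' \<le> f" using I4 f1f by simp
      have A6: "h' = h \<longrightarrow> f' = f" using I1 hne by auto
      show ?thesis unfolding ml h'_def[symmetric] f'_def[symmetric]
        using A1 A2 P3 A4 P5 A6 by blast
    next
      case False
      then show ?thesis using mloop_stop[of h f C F, OF hne False] by simp
    qed
  qed
qed


lemma merge_props:
  assumes S: "Srt F C h" and ch: "h \<noteq> 0 \<longrightarrow> C h < c" and f1: "1 \<le> f" and fc: "f \<le> c"
  defines "h' \<equiv> fst (mloop F C h f)" and "f' \<equiv> snd (mloop F C h f)"
  shows "Srt (F(Suc h' := f')) (C(Suc h' := c)) (Suc h')"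
    and "\<forall>q. covS (F(Suc h' := f')) (C(Suc h' := c)) (Suc h') q \<longleftrightarrow> covS F C h q \<or> (f \<le> q \<and> q \<le> c)"
    and "\<forall>q hx. q \<le> c \<longrightarrow> Tinv F C h q hx \<longrightarrow> \<not> covS (F(Suc h' := f')) (C(Suc h' := c)) (Suc h') q \<longrightarrow>
           Tinv (F(Suc h' := f')) (C(Suc h' := c)) (Suc h') q hx"
    and "h' \<le> h"
proof -
  have M: "h' \<le> h" "h' \<noteq> 0 \<longrightarrow> C h' < f'" "\<forall>i. h' < i \<and> i \<le> h \<longrightarrow> f \<le> C i" "f' \<le> f"
    "h' < h \<longrightarrow> f' = min f (F (Suc h'))" "h' = h \<longrightarrow> f' = f"
    using mloop_props[OF S, of f] unfolding h'_def f'_def by auto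
  show "h' \<le> h" by (rule M(1))
  have f'1: "1 \<le> f'"
  proof (cases "h' < h")
    case True
    then have "1 \<le> F (Suc h')" using S unfolding Srt_def by auto
    then show ?thesis using M(5) True f1 by auto
  next
    case False then show ?thesis using M(1,6) f1 by auto
  qed
  have f'F: "h' < h \<Longrightarrow> f' \<le> F (Suc h')" using M(5) by auto
  show SS: "Srt (F(Suc h' := f')) (C(Suc h' := c)) (Suc h')"
    unfolding Srt_def
  proof (intro conjI allI impI)
    fix i assume i: "1 \<le> i \<and> i \<le> Suc h'"
    show "1 \<le> (F(Suc h' := f')) i" using i f'1 S M(1) unfolding Srt_def by auto
    show "(F(Suc h' := f')) i \<le> (C(Suc h' := c)) i" using i M(1,4) fc S unfolding Srt_def by auto
  next
    fix i assume i: "1 \<le> i \<and> i < Suc h'"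
    show "(C(Suc h' := c)) i < (F(Suc h' := f')) (Suc i)"
    proof (cases "i = h'")
      case True then show ?thesis using M(2) i by auto
    next
      case False
      then have "i < h'" using i by auto
      then show ?thesis using S M(1) i unfolding Srt_def by auto
    qed
  qed
  show "\<forall>q. covS (F(Suc h' := f')) (C(Suc h' := c)) (Suc h') q \<longleftrightarrow> covS F C h q \<or> (f \<le> q \<and> q \<le> c)"
  proof (intro allI iffI)
    fix q assume "covS (F(Suc h' := f')) (C(Suc h' := c)) (Suc h') q"
    then obtain i where i: "1 \<le> i" "i \<le> Suc h'" "(F(Suc h' := f')) i \<le> q" "q \<le> (C(Suc h' := c)) i"
      unfolding covS_def by auto
    show "covS F C h q \<or> (f \<le> q \<and> q \<le> c)"
    proof (cases "i = Suc h'")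
      case False
      then have "F i \<le> q" "q \<le> C i" "i \<le> h" using i M(1) by auto
      then show ?thesis unfolding covS_def using i(1) by auto
    next
      case True
      then have q: "f' \<le> q" "q \<le> c" using i by auto
      show ?thesis
      proof (cases "f \<le> q")
        case True then show ?thesis using q by auto
      next
        case False
        then have hh: "h' < h" using M(1) M(6) q by auto
        then have "f' = F (Suc h')" using M(5) False q by auto
        moreover have "f \<le> C (Suc h')" using M(3) hh by auto
        ultimately have "F (Suc h') \<le> q" "q \<le> C (Suc h')" using q False by auto
        then show ?thesis unfolding covS_def using hh by (intro disjI1 exI[of _ "Suc h'"]) auto
      qed
    qed
  next
    fix q assume "covS F C h q \<or> (f \<le> q \<and> q \<le> c)"
    then show "covS (F(Suc h' := f')) (C(Suc h' := c)) (Suc h') q"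
    proof
      assume "covS F C h q"
      then obtain i where i: "1 \<le> i" "i \<le> h" "F i \<le> q" "q \<le> C i" unfolding covS_def by auto
      show ?thesis
      proof (cases "i \<le> h'")
        case True then show ?thesis unfolding covS_def using i by (intro exI[of _ i]) auto
      next
        case False
        then have hh: "h' < h" using i by auto
        have "F (Suc h') \<le> F i" using Srt_F_mono[OF S, of "Suc h'" i] False i by auto
        then have a: "f' \<le> q" using f'F[OF hh] i by auto
        have "C i \<le> C h" using Srt_C_mono[OF S i(1) i(2)] by simp
        then have b: "q \<le> c" using ch i by auto
        show ?thesis unfolding covS_def using a b by (intro exI[of _ "Suc h'"]) auto
      qed
    next
      assume "f \<le> q \<and> q \<le> c"
      then show ?thesis unfolding covS_def using M(4) by (intro exI[of _ "Suc h'"]) auto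
    qed
  qed
  show "\<forall>q hx. q \<le> c \<longrightarrow> Tinv F C h q hx \<longrightarrow> \<not> covS (F(Suc h' := f')) (C(Suc h' := c)) (Suc h') q \<longrightarrow>
           Tinv (F(Suc h' := f')) (C(Suc h' := c)) (Suc h') q hx"
  proof (intro allI impI)
    fix q hx assume qc: "q \<le> c" and T: "Tinv F C h q hx" and nc: "\<not> covS (F(Suc h' := f')) (C(Suc h' := c)) (Suc h') q"
    have qf: "q < f'"
    proof (rule ccontr)
      assume "\<not> q < f'"
      then have "covS (F(Suc h' := f')) (C(Suc h' := c)) (Suc h') q" unfolding covS_def using qc
        by (intro exI[of _ "Suc h'"]) auto
      then show False using nc by simp
    qed
    have T1: "hx \<le> h" "hx \<noteq> 0 \<longrightarrow> C hx < q" "hx < h \<longrightarrow> q < F (Suc hx)" using T unfolding Tinv_def by auto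
    have hxh: "hx \<le> h'"
    proof (rule ccontr)
      assume "\<not> hx \<le> h'"
      then have hh: "h' < h" "Suc h' \<le> hx" using T1(1) by auto
      have "F (Suc h') \<le> F hx" using Srt_F_mono[OF S, of "Suc h'" hx] hh T1(1) by auto
      moreover have "F hx \<le> C hx" using S hh T1(1) unfolding Srt_def by auto
      ultimately show False using f'F[OF hh(1)] qf T1(2) hh by auto
    qed
    show "Tinv (F(Suc h' := f')) (C(Suc h' := c)) (Suc h') q hx"
      unfolding Tinv_def
    proof (intro conjI impI)
      show "hx \<le> Suc h'" using hxh by simp
      show "hx \<noteq> 0 \<Longrightarrow> (C(Suc h' := c)) hx < q" using hxh T1(2) by auto
      show "(F(Suc h' := f')) (Suc hx) > q" if "hx < Suc h'"
      proof (cases "hx = h'")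
        case True then show ?thesis using qf by simp
      next
        case False then show ?thesis using hxh T1(3) M(1) by auto
      qed
    qed
  qed
qed


definition amb :: "'a list \<Rightarrow> bool" where
  "amb w \<longleftrightarrow> (\<exists>a c i j. a < c \<and> c < j \<and> j < length w \<and> w ! a = w ! c \<and> w ! Suc a \<noteq> w ! Suc c \<and>
     a \<le> i \<and> i \<le> c \<and> w ! i = w ! j)"

definition cov :: "'a list \<Rightarrow> nat \<Rightarrow> bool" where
  "cov w q \<longleftrightarrow> (\<exists>a c. a < c \<and> Suc c < length w \<and> w ! a = w ! c \<and> w ! Suc a \<noteq> w ! Suc c \<and> a < q \<and> q \<le> Suc c)"

lemma amb_mono: "amb w \<Longrightarrow> amb (w @ [u])"
proof -
  assume "amb w"
  then obtain a c i j where h: "a < c" "c < j" "j < length w" "w ! a = w ! c" "w ! Suc a \<noteq> w ! Suc c"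
    "a \<le> i" "i \<le> c" "w ! i = w ! j" unfolding amb_def by blast
  show "amb (w @ [u])" unfolding amb_def
    by (rule exI[of _ a], rule exI[of _ c], rule exI[of _ i], rule exI[of _ j]) (use h in \<open>auto simp: nth_append\<close>)
qed

lemma cov_snoc:
  assumes "w \<noteq> []"
  shows "cov (w @ [u]) q \<longleftrightarrow> cov w q \<or>
    (\<exists>a. a < length w - 1 \<and> w ! a = w ! (length w - 1) \<and> w ! Suc a \<noteq> u \<and> a < q \<and> q \<le> length w)"
proof
  assume "cov (w @ [u]) q"
  then obtain a c where h: "a < c" "Suc c < length w + 1" "(w@[u]) ! a = (w@[u]) ! c"
    "(w@[u]) ! Suc a \<noteq> (w@[u]) ! Suc c" "a < q" "q \<le> Suc c" unfolding cov_def by auto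
  show "cov w q \<or> (\<exists>a. a < length w - 1 \<and> w ! a = w ! (length w - 1) \<and> w ! Suc a \<noteq> u \<and> a < q \<and> q \<le> length w)"
  proof (cases "Suc c < length w")
    case True
    then have "cov w q" unfolding cov_def using h by (intro exI[of _ a] exI[of _ c]) (auto simp: nth_append)
    then show ?thesis by simp
  next
    case False
    then have c: "Suc c = length w" using h(2) by auto
    have "(w@[u]) ! Suc c = u" using c by (simp add: nth_append)
    moreover have "c = length w - 1" using c by auto
    ultimately show ?thesis using h c by (intro disjI2 exI[of _ a]) (auto simp: nth_append)
  qed
next
  assume "cov w q \<or> (\<exists>a. a < length w - 1 \<and> w ! a = w ! (length w - 1) \<and> w ! Suc a \<noteq> u \<and> a < q \<and> q \<le> length w)"
  then show "cov (w @ [u]) q"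
  proof
    assume "cov w q"
    then obtain a c where h: "a < c" "Suc c < length w" "w ! a = w ! c" "w ! Suc a \<noteq> w ! Suc c" "a < q" "q \<le> Suc c"
      unfolding cov_def by auto
    show ?thesis unfolding cov_def using h by (intro exI[of _ a] exI[of _ c]) (auto simp: nth_append)
  next
    assume "\<exists>a. a < length w - 1 \<and> w ! a = w ! (length w - 1) \<and> w ! Suc a \<noteq> u \<and> a < q \<and> q \<le> length w"
    then obtain a where h: "a < length w - 1" "w ! a = w ! (length w - 1)" "w ! Suc a \<noteq> u" "a < q" "q \<le> length w" by auto
    show ?thesis unfolding cov_def using h assms
      by (intro exI[of _ a] exI[of _ "length w - 1"]) (auto simp: nth_append)
  qed
qed

lemma newcov:
  assumes na: "\<not> amb w" and ne: "w \<noteq> []" and a0: "a0 < length w" "w ! a0 = w ! (length w - 1)"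
    "\<forall>i<a0. w ! i \<noteq> w ! (length w - 1)"
  shows "(\<exists>a. a < length w - 1 \<and> w ! a = w ! (length w - 1) \<and> w ! Suc a \<noteq> u \<and> a < q \<and> q \<le> length w) \<longleftrightarrow>
    (a0 < length w - 1 \<and> w ! Suc a0 \<noteq> u \<and> a0 < q \<and> q \<le> length w)"
proof
  assume "\<exists>a. a < length w - 1 \<and> w ! a = w ! (length w - 1) \<and> w ! Suc a \<noteq> u \<and> a < q \<and> q \<le> length w"
  then obtain a where h: "a < length w - 1" "w ! a = w ! (length w - 1)" "w ! Suc a \<noteq> u" "a < q" "q \<le> length w" by auto
  have aa: "a0 \<le> a" using a0(3) h(2) by (meson not_le)
  have "w ! Suc a0 \<noteq> u"
  proof
    assume e: "w ! Suc a0 = u"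
    then have "a0 \<noteq> a" using h(3) by auto
    then have "a0 < a" using aa by simp
    then have "amb w" unfolding amb_def using h a0
      by (intro exI[of _ a0] exI[of _ a] exI[of _ a] exI[of _ "length w - 1"]) (auto simp: e)
    then show False using na by simp
  qed
  then show "a0 < length w - 1 \<and> w ! Suc a0 \<noteq> u \<and> a0 < q \<and> q \<le> length w" using h aa by auto
next
  assume "a0 < length w - 1 \<and> w ! Suc a0 \<noteq> u \<and> a0 < q \<and> q \<le> length w"
  then show "\<exists>a. a < length w - 1 \<and> w ! a = w ! (length w - 1) \<and> w ! Suc a \<noteq> u \<and> a < q \<and> q \<le> length w"
    using a0 by (intro exI[of _ a0]) auto
qed

lemma amb_new: "\<not> amb w \<Longrightarrow> u \<notin> set w \<Longrightarrow> \<not> amb (w @ [u])"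
proof
  assume na: "\<not> amb w" and u: "u \<notin> set w" and "amb (w @ [u])"
  then obtain a c i j where h: "a < c" "c < j" "j < length w + 1" "(w@[u]) ! a = (w@[u]) ! c"
    "(w@[u]) ! Suc a \<noteq> (w@[u]) ! Suc c" "a \<le> i" "i \<le> c" "(w@[u]) ! i = (w@[u]) ! j" unfolding amb_def by auto
  show False
  proof (cases "j < length w")
    case True
    then have "amb w" unfolding amb_def using h by (intro exI[of _ a] exI[of _ c] exI[of _ i] exI[of _ j]) (auto simp: nth_append)
    then show False using na by simp
  next
    case False
    then have "j = length w" using h by simp
    then have "w ! i = u" using h by (auto simp: nth_append)
    moreover have "i < length w" using h \<open>j = length w\<close> by simp
    ultimately show False using u nth_mem by fastforce
  qed
qed

lemma amb_snoc_iff: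
  assumes na: "\<not> amb w" and l: "l < length w" "w ! l = u" "\<forall>i. l < i \<and> i < length w \<longrightarrow> w ! i \<noteq> u"
  shows "amb (w @ [u]) \<longleftrightarrow> cov (w @ [u]) (Suc l)"
proof
  assume "amb (w @ [u])"
  then obtain a c i j where h: "a < c" "c < j" "j < length w + 1" "(w@[u]) ! a = (w@[u]) ! c"
    "(w@[u]) ! Suc a \<noteq> (w@[u]) ! Suc c" "a \<le> i" "i \<le> c" "(w@[u]) ! i = (w@[u]) ! j" unfolding amb_def by auto
  have jn: "j = length w"
  proof (rule ccontr)
    assume "j \<noteq> length w"
    then have "amb w" unfolding amb_def using h by (intro exI[of _ a] exI[of _ c] exI[of _ i] exI[of _ j]) (auto simp: nth_append)
    then show False using na by simp
  qed
  then have wi: "w ! i = u" "i < length w" using h by (auto simp: nth_append)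
  have il: "i \<le> l"
  proof (rule ccontr)
    assume "\<not> i \<le> l"
    then show False using l(3) wi by auto
  qed
  show "cov (w @ [u]) (Suc l)"
  proof (cases "l \<le> c")
    case True
    then show ?thesis unfolding cov_def using h jn il by (intro exI[of _ a] exI[of _ c]) auto
  next
    case False
    then have "amb w" unfolding amb_def using h jn il l wi
      by (intro exI[of _ a] exI[of _ c] exI[of _ i] exI[of _ l]) (auto simp: nth_append)
    then show ?thesis using na by simp
  qed
next
  assume "cov (w @ [u]) (Suc l)"
  then obtain a c where h: "a < c" "Suc c < length (w @ [u])" "(w@[u]) ! a = (w@[u]) ! c"
    "(w@[u]) ! Suc a \<noteq> (w@[u]) ! Suc c" "a < Suc l" "Suc l \<le> Suc c" unfolding cov_def by auto
  show "amb (w @ [u])" unfolding amb_def using h l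
    by (intro exI[of _ a] exI[of _ c] exI[of _ l] exI[of _ "length w"]) (auto simp: nth_append)
qed


definition Deep :: "nat list \<Rightarrow> st \<Rightarrow> bool" where
  "Deep w s \<longleftrightarrow> sJ s = length w \<and> (w \<noteq> [] \<longrightarrow> sP s = w ! (length w - 1)) \<and>
  (\<forall>x. sLast s x = 0 \<longrightarrow> x \<notin> set w) \<and>
  (\<forall>x. sLast s x \<noteq> 0 \<longrightarrow> sLast s x \<le> length w \<and> w ! (sLast s x - 1) = x \<and>
      (\<forall>i. sLast s x \<le> i \<and> i < length w \<longrightarrow> w ! i \<noteq> x)) \<and>
  (\<forall>x\<in>set w. 0 < sFirst s x \<and> sFirst s x \<le> length w \<and> w ! (sFirst s x - 1) = x \<and>
      (\<forall>i. i < sFirst s x - 1 \<longrightarrow> w ! i \<noteq> x) \<and> (sFirst s x < length w \<longrightarrow> sSucc s x = w ! sFirst s x)) \<and>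
  Srt (sF s) (sC s) (sH s) \<and> (sH s \<noteq> 0 \<longrightarrow> sC s (sH s) < length w) \<and>
  (\<forall>q. covS (sF s) (sC s) (sH s) q \<longleftrightarrow> cov w q) \<and>
  (\<forall>x. sLast s x \<noteq> 0 \<longrightarrow> \<not> cov w (sLast s x) \<longrightarrow> Tinv (sF s) (sC s) (sH s) (sLast s x) (sHx s x)) \<and>
  (\<forall>i. 1 \<le> i \<and> i \<le> sH s \<longrightarrow> sLast s (w ! (sC s i - 1)) = sC s i)"

lemma stack_card:
  assumes S: "Srt F C H" and CH: "H \<noteq> 0 \<longrightarrow> C H \<le> length w"
    and L: "\<forall>i. 1 \<le> i \<and> i \<le> H \<longrightarrow> Lst (w ! (C i - 1)) = C i"
  shows "H \<le> card (set w)"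
proof -
  have Cle: "C i \<le> length w" "1 \<le> C i" if "1 \<le> i" "i \<le> H" for i
  proof -
    show "C i \<le> length w" using Srt_C_mono[OF S that(1,2) order.refl] CH that by auto
    show "1 \<le> C i" using S that unfolding Srt_def by fastforce
  qed
  have inj: "inj_on (\<lambda>i. w ! (C i - 1)) {1..H}"
  proof (rule inj_onI)
    fix i j assume i: "i \<in> {1..H}" and j: "j \<in> {1..H}" and e: "w ! (C i - 1) = w ! (C j - 1)"
    have "C i = C j" using L i j e by (metis atLeastAtMost_iff)
    show "i = j"
    proof (rule ccontr)
      assume "i \<noteq> j"
      then consider "i < j" | "j < i" by linarith
      then show False
      proof cases
        case 1
        have "C i < F j" using Srt_mono[OF S _ 1] i j by auto
        moreover have "F j \<le> C j" using S j unfolding Srt_def by auto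
        ultimately show False using \<open>C i = C j\<close> by simp
      next
        case 2
        have "C j < F i" using Srt_mono[OF S _ 2] i j by auto
        moreover have "F i \<le> C i" using S i unfolding Srt_def by auto
        ultimately show False using \<open>C i = C j\<close> by simp
      qed
    qed
  qed
  have sub: "(\<lambda>i. w ! (C i - 1)) ` {1..H} \<subseteq> set w"
  proof
    fix y assume "y \<in> (\<lambda>i. w ! (C i - 1)) ` {1..H}"
    then obtain i where i: "i \<in> {1..H}" "y = w ! (C i - 1)" by auto
    then have "C i - 1 < length w" using Cle[of i] by auto
    then show "y \<in> set w" using i by simp
  qed
  have "card {1..H} \<le> card (set w)" using card_inj_on_le[OF inj sub] by simp
  then show ?thesis by simp
qed


lemma Deep_D:
  assumes "Deep w s"
  shows "sJ s = length w" "w \<noteq> [] \<Longrightarrow> sP s = w ! (length w - 1)"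
    "\<And>x. sLast s x = 0 \<Longrightarrow> x \<notin> set w"
    "\<And>x. sLast s x \<noteq> 0 \<Longrightarrow> sLast s x \<le> length w"
    "\<And>x. sLast s x \<noteq> 0 \<Longrightarrow> w ! (sLast s x - 1) = x"
    "\<And>x i. sLast s x \<noteq> 0 \<Longrightarrow> sLast s x \<le> i \<Longrightarrow> i < length w \<Longrightarrow> w ! i \<noteq> x"
    "\<And>x. x \<in> set w \<Longrightarrow> 0 < sFirst s x" "\<And>x. x \<in> set w \<Longrightarrow> sFirst s x \<le> length w"
    "\<And>x. x \<in> set w \<Longrightarrow> w ! (sFirst s x - 1) = x"
    "\<And>x i. x \<in> set w \<Longrightarrow> i < sFirst s x - 1 \<Longrightarrow> w ! i \<noteq> x"
    "\<And>x. x \<in> set w \<Longrightarrow> sFirst s x < length w \<Longrightarrow> sSucc s x = w ! sFirst s x"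
    "Srt (sF s) (sC s) (sH s)" "sH s \<noteq> 0 \<Longrightarrow> sC s (sH s) < length w"
    "\<And>q. covS (sF s) (sC s) (sH s) q \<longleftrightarrow> cov w q"
    "\<And>x. sLast s x \<noteq> 0 \<Longrightarrow> \<not> cov w (sLast s x) \<Longrightarrow> Tinv (sF s) (sC s) (sH s) (sLast s x) (sHx s x)"
    "\<And>i. 1 \<le> i \<Longrightarrow> i \<le> sH s \<Longrightarrow> sLast s (w ! (sC s i - 1)) = sC s i"
  using assms unfolding Deep_def by blast+

lemma Deep_last_in: "Deep w s \<Longrightarrow> x \<in> set w \<Longrightarrow> sLast s x \<noteq> 0"
  using Deep_D(3) by blast

lemma Deep_last_of_last:
  assumes D: "Deep w s" and ne: "w \<noteq> []"
  shows "sLast s (w ! (length w - 1)) = length w"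
proof -
  let ?p = "w ! (length w - 1)"
  have pin: "?p \<in> set w" using ne by simp
  then have L0: "sLast s ?p \<noteq> 0" using Deep_last_in[OF D] by simp
  have "sLast s ?p \<le> length w" using Deep_D(4)[OF D L0] .
  moreover have "\<not> sLast s ?p \<le> length w - 1"
    using Deep_D(6)[OF D L0, of "length w - 1"] ne by auto
  ultimately show ?thesis by simp
qed

lemma Deep_nil_H: "Deep [] s \<Longrightarrow> sH s = 0"
proof (rule ccontr)
  assume D: "Deep [] s" and "sH s \<noteq> 0"
  then have "covS (sF s) (sC s) (sH s) (sF s 1)" unfolding covS_def using Deep_D(12)[OF D]
    unfolding Srt_def by (intro exI[of _ 1]) auto
  then have "cov ([]::nat list) (sF s 1)" using Deep_D(14)[OF D] by simp
  then show False unfolding cov_def by simp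
qed

lemma dev_props:
  fixes u :: nat
  assumes D: "Deep w s" and na: "\<not> amb w"
  defines "s2 \<equiv> dev (s\<lparr>sJ := Suc (sJ s)\<rparr>) u"
  shows "sJ s2 = Suc (length w) \<and> sP s2 = sP s \<and> sLast s2 = sLast s \<and> sFirst s2 = sFirst s \<and> sHx s2 = sHx s \<and>
    sAmb s2 = sAmb s \<and>
    (\<forall>x\<in>set w. sFirst s x < Suc (length w) \<longrightarrow> sSucc s2 x = (w @ [u]) ! sFirst s x) \<and>
    Srt (sF s2) (sC s2) (sH s2) \<and> (sH s2 \<noteq> 0 \<longrightarrow> sC s2 (sH s2) \<le> length w) \<and>
    (\<forall>q. covS (sF s2) (sC s2) (sH s2) q \<longleftrightarrow> cov (w @ [u]) q) \<and>
    (\<forall>x. sLast s x \<noteq> 0 \<longrightarrow> \<not> cov (w @ [u]) (sLast s x) \<longrightarrow> Tinv (sF s2) (sC s2) (sH s2) (sLast s x) (sHx s x)) \<and>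
    (\<forall>i. 1 \<le> i \<and> i \<le> sH s2 \<longrightarrow> sLast s (w ! (sC s2 i - 1)) = sC s2 i) \<and>
    sH s2 \<le> card (set w)"
proof -
  define n where "n = length w"
  define s1 where "s1 = s\<lparr>sJ := Suc (sJ s)\<rparr>"
  have J: "sJ s = n" using Deep_D(1)[OF D] n_def by simp
  have Hcard: "sH s \<le> card (set w)"
    by (rule stack_card[OF Deep_D(12)[OF D], where Lst = "sLast s"]) (use Deep_D(13,16)[OF D] in auto)
  show ?thesis
  proof (cases "n = 0")
    case True
    then have w: "w = []" using n_def by simp
    have H0: "sH s = 0" using Deep_nil_H D w by simp
    have e: "s2 = s1" unfolding s2_def s1_def dev_def using J True by simp
    have cv: "\<not> cov [u] q" for q unfolding cov_def by auto
    have cS: "\<not> covS F C 0 q" for F C q unfolding covS_def by auto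
    have L0: "\<forall>x. sLast s x = 0" using Deep_D(4)[OF D] w by fastforce
    show ?thesis unfolding e s1_def using H0 w cv cS Deep_D(12)[OF D] J True L0 by (simp add: Tinv_def)
  next
    case False
    then have ne: "w \<noteq> []" using n_def by auto
    define p where "p = sP s"
    have p: "p = w ! (n - 1)" using Deep_D(2)[OF D ne] p_def n_def by simp
    have pin: "p \<in> set w" using p ne n_def by simp
    define f where "f = sFirst s p"
    have f: "0 < f" "f \<le> n" "w ! (f - 1) = p" "\<forall>i. i < f - 1 \<longrightarrow> w ! i \<noteq> p"
      using Deep_D(7,8,9,10)[OF D pin] f_def n_def by auto
    have NC: "(\<exists>a. a < n - 1 \<and> w ! a = w ! (n - 1) \<and> w ! Suc a \<noteq> u \<and> a < q \<and> q \<le> n) \<longleftrightarrow>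
      (f - 1 < n - 1 \<and> w ! Suc (f - 1) \<noteq> u \<and> f - 1 < q \<and> q \<le> n)" for q
      using newcov[OF na ne, of "f - 1" u q] f p n_def by auto
    have CW: "cov (w @ [u]) q \<longleftrightarrow> cov w q \<or> (f - 1 < n - 1 \<and> w ! Suc (f - 1) \<noteq> u \<and> f - 1 < q \<and> q \<le> n)" for q
      using cov_snoc[OF ne, of u q] NC[of q] n_def by simp
    have Lp: "sLast s p = n" using Deep_last_of_last[OF D ne] p n_def by simp
    have oldsucc: "sSucc s x = (w @ [u]) ! sFirst s x" if "x \<in> set w" "sFirst s x < n" for x
      using Deep_D(11)[OF D that(1)] that n_def by (simp add: nth_append)
    have CHn: "sH s \<noteq> 0 \<longrightarrow> sC s (sH s) < n" using Deep_D(13)[OF D] n_def by simp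
    show ?thesis
    proof (cases "n \<le> f")
      case True
      then have fn: "f = n" using f by simp
      have e: "s2 = s1\<lparr>sSucc := (sSucc s)(p := u)\<rparr>" unfolding s2_def s1_def dev_def Let_def
        using J True False p_def f_def by simp
      have CW': "cov (w @ [u]) q \<longleftrightarrow> cov w q" for q using CW[of q] fn by auto
      have succ: "\<forall>x\<in>set w. sFirst s x < Suc n \<longrightarrow> ((sSucc s)(p := u)) x = (w @ [u]) ! sFirst s x"
      proof (intro ballI impI)
        fix x assume x: "x \<in> set w" "sFirst s x < Suc n"
        show "((sSucc s)(p := u)) x = (w @ [u]) ! sFirst s x"
        proof (cases "x = p")
          case True then show ?thesis using fn f_def n_def by (simp add: nth_append)
        next
          case False
          have "sFirst s x \<noteq> n"
          proof
            assume "sFirst s x = n"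
            then have "w ! (n - 1) = x" using Deep_D(9)[OF D x(1)] by simp
            then show False using p False by simp
          qed
          then show ?thesis using oldsucc[OF x(1)] x False by simp
        qed
      qed
      show ?thesis unfolding e s1_def using Deep_D[OF D] CW' succ CHn Hcard n_def by auto
    next
      case fl: False
      show ?thesis
      proof (cases "sSucc s p = u")
        case True
        have e: "s2 = s1" unfolding s2_def s1_def dev_def Let_def
          using J False fl True p_def f_def by simp
        have ws: "w ! Suc (f - 1) = u" using Deep_D(11)[OF D pin] fl f True f_def n_def by simp
        have CW': "cov (w @ [u]) q \<longleftrightarrow> cov w q" for q using CW[of q] ws by auto
        have succ: "\<forall>x\<in>set w. sFirst s x < Suc n \<longrightarrow> sSucc s x = (w @ [u]) ! sFirst s x"
        proof (intro ballI impI)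
          fix x assume x: "x \<in> set w" "sFirst s x < Suc n"
          have "sFirst s x \<noteq> n"
          proof
            assume a: "sFirst s x = n"
            then have "w ! (n - 1) = x" using Deep_D(9)[OF D x(1)] by simp
            then have "x = p" using p by simp
            then show False using a fl f_def by simp
          qed
          then show "sSucc s x = (w @ [u]) ! sFirst s x" using oldsucc[OF x(1)] x by simp
        qed
        show ?thesis unfolding e s1_def using Deep_D[OF D] CW' succ CHn Hcard n_def by auto
      next
        case su: False
        define h' where "h' = fst (mloop (sF s) (sC s) (sH s) f)"
        define f' where "f' = snd (mloop (sF s) (sC s) (sH s) f)"
        have e: "s2 = s1\<lparr>sH := Suc h', sF := (sF s)(Suc h' := f'), sC := (sC s)(Suc h' := n)\<rparr>"
          unfolding s2_def s1_def dev_def Let_def h'_def f'_def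
          using J False fl su p_def f_def by simp
        have ws: "w ! Suc (f - 1) \<noteq> u" using Deep_D(11)[OF D pin] fl f su f_def n_def by simp
        have CW': "cov (w @ [u]) q \<longleftrightarrow> cov w q \<or> (f \<le> q \<and> q \<le> n)" for q
          using CW[of q] ws fl f by auto
        have S: "Srt (sF s) (sC s) (sH s)" by (rule Deep_D(12)[OF D])
        have f1: "1 \<le> f" using f(1) by simp
        note MP = merge_props[OF S CHn f1 f(2), folded h'_def f'_def]
        have covS2: "\<forall>q. covS ((sF s)(Suc h' := f')) ((sC s)(Suc h' := n)) (Suc h') q \<longleftrightarrow> cov (w @ [u]) q"
          using MP(2) CW' Deep_D(14)[OF D] by auto
        have T2: "\<forall>x. sLast s x \<noteq> 0 \<longrightarrow> \<not> cov (w @ [u]) (sLast s x) \<longrightarrow>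
            Tinv ((sF s)(Suc h' := f')) ((sC s)(Suc h' := n)) (Suc h') (sLast s x) (sHx s x)"
        proof (intro allI impI)
          fix x assume x: "sLast s x \<noteq> 0" "\<not> cov (w @ [u]) (sLast s x)"
          have "\<not> cov w (sLast s x)" using CW' x(2) by auto
          then have T: "Tinv (sF s) (sC s) (sH s) (sLast s x) (sHx s x)" using Deep_D(15)[OF D x(1)] by simp
          have "sLast s x \<le> n" using Deep_D(4)[OF D x(1)] n_def by simp
          then show "Tinv ((sF s)(Suc h' := f')) ((sC s)(Suc h' := n)) (Suc h') (sLast s x) (sHx s x)"
            using MP(3) T x(2) covS2 by blast
        qed
        have D9: "\<forall>i. 1 \<le> i \<and> i \<le> Suc h' \<longrightarrow> sLast s (w ! (((sC s)(Suc h' := n)) i - 1)) = ((sC s)(Suc h' := n)) i"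
        proof (intro allI impI)
          fix i assume i: "1 \<le> i \<and> i \<le> Suc h'"
          show "sLast s (w ! (((sC s)(Suc h' := n)) i - 1)) = ((sC s)(Suc h' := n)) i"
          proof (cases "i = Suc h'")
            case True then show ?thesis using Lp p by simp
          next
            case False
            then have "i \<le> sH s" using i MP(4) by auto
            then show ?thesis using Deep_D(16)[OF D] i False by auto
          qed
        qed
        have Hc: "Suc h' \<le> card (set w)"
          by (rule stack_card[OF MP(1), where Lst = "sLast s"]) (use D9 n_def in auto)
        have succ: "\<forall>x\<in>set w. sFirst s x < Suc n \<longrightarrow> sSucc s x = (w @ [u]) ! sFirst s x"
        proof (intro ballI impI)
          fix x assume x: "x \<in> set w" "sFirst s x < Suc n"
          have "sFirst s x \<noteq> n"
          proof
            assume a: "sFirst s x = n"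
            then have "w ! (n - 1) = x" using Deep_D(9)[OF D x(1)] by simp
            then have "x = p" using p by simp
            then show False using a fl f_def by simp
          qed
          then show "sSucc s x = (w @ [u]) ! sFirst s x" using oldsucc[OF x(1)] x by simp
        qed
        show ?thesis unfolding e s1_def using covS2 T2 D9 Hc MP(1) succ n_def J
          by simp
      qed
    qed
  qed
qed


lemma Deep_final:
  fixes u :: nat and w :: "nat list"
  assumes D: "Deep w s"
    and P: "Srt (sF r) (sC r) (sH r)" "sH r \<noteq> 0 \<longrightarrow> sC r (sH r) \<le> length w"
      "\<forall>x\<in>set w. sFirst s x < Suc (length w) \<longrightarrow> sSucc r x = (w @ [u]) ! sFirst s x"
      "\<forall>q. covS (sF r) (sC r) (sH r) q \<longleftrightarrow> cov (w @ [u]) q"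
      "\<forall>x. sLast s x \<noteq> 0 \<longrightarrow> \<not> cov (w @ [u]) (sLast s x) \<longrightarrow> Tinv (sF r) (sC r) (sH r) (sLast s x) (sHx s x)"
      "\<forall>i. 1 \<le> i \<and> i \<le> sH r \<longrightarrow> sLast s (w ! (sC r i - 1)) = sC r i"
    and t: "sJ t = Suc (length w)" "sLast t = sLast s" "sHx t = sHx s" "sSucc t = sSucc r"
      "sF t = sF r" "sC t = sC r" "sH t = sH r"
    and first: "\<forall>x\<in>set w. sFirst t x = sFirst s x" "u \<notin> set w \<Longrightarrow> sFirst t u = Suc (length w)"
    and ok: "sLast s u \<noteq> 0 \<Longrightarrow> \<not> cov (w @ [u]) (sLast s u)"
  shows "Deep (w @ [u]) (upd t u)"
proof -
  define n where "n = length w"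
  define w' where "w' = w @ [u]"
  have nth': "w' ! i = w ! i" if "i < n" for i using that unfolding w'_def n_def by (simp add: nth_append)
  have nthn: "w' ! n = u" unfolding w'_def n_def by simp
  have lw': "length w' = Suc n" unfolding w'_def n_def by simp
  let ?L = "(sLast s)(u := Suc n)"
  have uL: "sLast (upd t u) = ?L" unfolding upd_def using t n_def by simp
  have Cle: "sC r i \<le> n" "1 \<le> sC r i" if "1 \<le> i" "i \<le> sH r" for i
  proof -
    show "sC r i \<le> n" using Srt_C_mono[OF P(1) that(1,2) order.refl] P(2) that n_def by auto
    show "1 \<le> sC r i" using P(1) that unfolding Srt_def by fastforce
  qed
  have c1: "sJ (upd t u) = length w'" using t lw' n_def unfolding upd_def by simp
  have c2: "w' \<noteq> [] \<longrightarrow> sP (upd t u) = w' ! (length w' - 1)" using nthn lw' unfolding upd_def by simp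
  have c3: "\<forall>x. sLast (upd t u) x = 0 \<longrightarrow> x \<notin> set w'"
  proof (intro allI impI)
    fix x assume "sLast (upd t u) x = 0"
    then have "x \<noteq> u" "sLast s x = 0" using uL by (auto split: if_splits)
    then show "x \<notin> set w'" using Deep_D(3)[OF D] unfolding w'_def by auto
  qed
  have c4: "\<forall>x. sLast (upd t u) x \<noteq> 0 \<longrightarrow> sLast (upd t u) x \<le> length w' \<and> w' ! (sLast (upd t u) x - 1) = x \<and>
      (\<forall>i. sLast (upd t u) x \<le> i \<and> i < length w' \<longrightarrow> w' ! i \<noteq> x)"
  proof (intro allI impI)
    fix x assume x: "sLast (upd t u) x \<noteq> 0"
    show "sLast (upd t u) x \<le> length w' \<and> w' ! (sLast (upd t u) x - 1) = x \<and>
      (\<forall>i. sLast (upd t u) x \<le> i \<and> i < length w' \<longrightarrow> w' ! i \<noteq> x)"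
    proof (cases "x = u")
      case True then show ?thesis using uL nthn lw' by auto
    next
      case False
      then have L: "sLast s x \<noteq> 0" "sLast (upd t u) x = sLast s x" using x uL by auto
      have a: "sLast s x \<le> n" using Deep_D(4)[OF D L(1)] n_def by simp
      have b: "w' ! (sLast s x - 1) = x" using Deep_D(5)[OF D L(1)] nth' a L(1) by simp
      have c: "\<forall>i. sLast s x \<le> i \<and> i < length w' \<longrightarrow> w' ! i \<noteq> x"
      proof (intro allI impI)
        fix i assume i: "sLast s x \<le> i \<and> i < length w'"
        show "w' ! i \<noteq> x"
        proof (cases "i < n")
          case True then show ?thesis using Deep_D(6)[OF D L(1)] i nth' n_def by simp
        next
          case False then have "i = n" using i lw' by simp
          then show ?thesis using nthn False \<open>x \<noteq> u\<close> by simp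
        qed
      qed
      show ?thesis using a b c L(2) lw' by simp
    qed
  qed
  have c5: "\<forall>x\<in>set w'. 0 < sFirst (upd t u) x \<and> sFirst (upd t u) x \<le> length w' \<and> w' ! (sFirst (upd t u) x - 1) = x \<and>
      (\<forall>i. i < sFirst (upd t u) x - 1 \<longrightarrow> w' ! i \<noteq> x) \<and> (sFirst (upd t u) x < length w' \<longrightarrow> sSucc (upd t u) x = w' ! sFirst (upd t u) x)"
  proof
    fix x assume xw: "x \<in> set w'"
    have fu: "sFirst (upd t u) = sFirst t" "sSucc (upd t u) = sSucc r" unfolding upd_def using t by auto
    show "0 < sFirst (upd t u) x \<and> sFirst (upd t u) x \<le> length w' \<and> w' ! (sFirst (upd t u) x - 1) = x \<and>
      (\<forall>i. i < sFirst (upd t u) x - 1 \<longrightarrow> w' ! i \<noteq> x) \<and> (sFirst (upd t u) x < length w' \<longrightarrow> sSucc (upd t u) x = w' ! sFirst (upd t u) x)"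
    proof (cases "x \<in> set w")
      case True
      have f: "sFirst (upd t u) x = sFirst s x" using first(1) True fu by simp
      have a: "0 < sFirst s x" "sFirst s x \<le> n" using Deep_D(7,8)[OF D True] n_def by auto
      have b: "w' ! (sFirst s x - 1) = x" using Deep_D(9)[OF D True] nth' a by simp
      have c: "\<forall>i. i < sFirst s x - 1 \<longrightarrow> w' ! i \<noteq> x" using Deep_D(10)[OF D True] nth' a by auto
      have d: "sFirst s x < length w' \<longrightarrow> sSucc r x = w' ! sFirst s x" using P(3) True lw' n_def w'_def by simp
      show ?thesis using f a b c d fu lw' by simp
    next
      case False
      then have xu: "x = u" using xw unfolding w'_def by simp
      have f: "sFirst (upd t u) x = Suc n" using first(2) False xu fu n_def by simp
      have c: "\<forall>i. i < n \<longrightarrow> w' ! i \<noteq> x" using False nth' n_def by (metis nth_mem)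
      show ?thesis using f c nthn xu lw' by simp
    qed
  qed
  have st: "sF (upd t u) = sF r" "sC (upd t u) = sC r" "sH (upd t u) = sH r" "sHx (upd t u) = (sHx s)(u := sH r)"
    unfolding upd_def using t by auto
  have c6: "Srt (sF (upd t u)) (sC (upd t u)) (sH (upd t u))" using P(1) st by simp
  have c7: "sH (upd t u) \<noteq> 0 \<longrightarrow> sC (upd t u) (sH (upd t u)) < length w'" using P(2) st lw' n_def by auto
  have c8: "\<forall>q. covS (sF (upd t u)) (sC (upd t u)) (sH (upd t u)) q \<longleftrightarrow> cov w' q" using P(4) st w'_def by simp
  have c9: "\<forall>x. sLast (upd t u) x \<noteq> 0 \<longrightarrow> \<not> cov w' (sLast (upd t u) x) \<longrightarrow>
      Tinv (sF (upd t u)) (sC (upd t u)) (sH (upd t u)) (sLast (upd t u) x) (sHx (upd t u) x)"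
  proof (intro allI impI)
    fix x assume x: "sLast (upd t u) x \<noteq> 0" "\<not> cov w' (sLast (upd t u) x)"
    show "Tinv (sF (upd t u)) (sC (upd t u)) (sH (upd t u)) (sLast (upd t u) x) (sHx (upd t u) x)"
    proof (cases "x = u")
      case True then show ?thesis using st uL P(2) n_def unfolding Tinv_def by auto
    next
      case False then show ?thesis using st uL x P(5) w'_def by auto
    qed
  qed
  have c10: "\<forall>i. 1 \<le> i \<and> i \<le> sH (upd t u) \<longrightarrow> sLast (upd t u) (w' ! (sC (upd t u) i - 1)) = sC (upd t u) i"
  proof (intro allI impI)
    fix i assume i: "1 \<le> i \<and> i \<le> sH (upd t u)"
    then have i2: "1 \<le> i" "i \<le> sH r" using st by auto
    have y: "w' ! (sC r i - 1) = w ! (sC r i - 1)" using nth' Cle[OF i2] by simp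
    have Ly: "sLast s (w ! (sC r i - 1)) = sC r i" using P(6) i2 by auto
    have ne: "w ! (sC r i - 1) \<noteq> u"
    proof
      assume e: "w ! (sC r i - 1) = u"
      then have Lu: "sLast s u = sC r i" using Ly by simp
      then have "sLast s u \<noteq> 0" using Cle[OF i2] by simp
      then have "\<not> cov (w @ [u]) (sC r i)" using ok Lu by simp
      moreover have "covS (sF r) (sC r) (sH r) (sC r i)" unfolding covS_def using i2 P(1) unfolding Srt_def
        by (intro exI[of _ i]) auto
      ultimately show False using P(4) by simp
    qed
    show "sLast (upd t u) (w' ! (sC (upd t u) i - 1)) = sC (upd t u) i"
      using uL st y Ly ne by simp
  qed
  show ?thesis unfolding Deep_def w'_def[symmetric]
    using c1 c2 c3 c4 c5 c6 c7 c8 c9 c10 by blast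
qed


lemma step_correct:
  fixes u :: nat
  assumes D: "Deep w s" and na: "\<not> amb w" and a0: "sAmb s = 0"
  shows "(sAmb (absstep s u) \<noteq> 0 \<longleftrightarrow> amb (w @ [u])) \<and> (sAmb (absstep s u) = 0 \<longrightarrow> Deep (w @ [u]) (absstep s u)) \<and>
    sH (dev (s\<lparr>sJ := Suc (sJ s)\<rparr>) u) \<le> card (set w) \<and> sH (absstep s u) = sH (dev (s\<lparr>sJ := Suc (sJ s)\<rparr>) u)"
proof -
  define s2 where "s2 = dev (s\<lparr>sJ := Suc (sJ s)\<rparr>) u"
  have P: "sJ s2 = Suc (length w) \<and> sP s2 = sP s \<and> sLast s2 = sLast s \<and> sFirst s2 = sFirst s \<and> sHx s2 = sHx s \<and>
    sAmb s2 = sAmb s \<and>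
    (\<forall>x\<in>set w. sFirst s x < Suc (length w) \<longrightarrow> sSucc s2 x = (w @ [u]) ! sFirst s x) \<and>
    Srt (sF s2) (sC s2) (sH s2) \<and> (sH s2 \<noteq> 0 \<longrightarrow> sC s2 (sH s2) \<le> length w) \<and>
    (\<forall>q. covS (sF s2) (sC s2) (sH s2) q \<longleftrightarrow> cov (w @ [u]) q) \<and>
    (\<forall>x. sLast s x \<noteq> 0 \<longrightarrow> \<not> cov (w @ [u]) (sLast s x) \<longrightarrow> Tinv (sF s2) (sC s2) (sH s2) (sLast s x) (sHx s x)) \<and>
    (\<forall>i. 1 \<le> i \<and> i \<le> sH s2 \<longrightarrow> sLast s (w ! (sC s2 i - 1)) = sC s2 i) \<and>
    sH s2 \<le> card (set w)"
    using dev_props[OF D na, of u] unfolding s2_def by blast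
  have ab: "absstep s u = query s2 u" unfolding absstep_def s2_def using a0 by simp
  have Hq: "sH (query s2 u) = sH s2" unfolding query_def upd_def by simp
  show ?thesis
  proof (cases "sLast s u = 0")
    case True
    then have un: "u \<notin> set w" using Deep_last_in[OF D] by blast
    let ?t = "s2\<lparr>sFirst := (sFirst s2)(u := sJ s2)\<rparr>"
    have q: "query s2 u = upd ?t u" unfolding query_def using True P by simp
    have "Deep (w @ [u]) (upd ?t u)"
      by (rule Deep_final[OF D, where r=s2]) (use P True un in auto)
    moreover have "sAmb (upd ?t u) = 0" using P a0 unfolding upd_def by simp
    moreover have "\<not> amb (w @ [u])" by (rule amb_new[OF na un])
    ultimately show ?thesis unfolding ab q[symmetric] using Hq P s2_def by simp
  next
    case False
    define L where "L = sLast s u"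
    have Lw: "L \<le> length w" "w ! (L - 1) = u" "\<forall>i. L \<le> i \<and> i < length w \<longrightarrow> w ! i \<noteq> u"
      using Deep_D(4,5,6)[OF D False] unfolding L_def by auto
    have L0: "L \<noteq> 0" using False L_def by simp
    have l1: "L - 1 < length w" using Lw(1) L0 by simp
    have l3: "\<forall>i. L - 1 < i \<and> i < length w \<longrightarrow> w ! i \<noteq> u"
    proof (intro allI impI)
      fix i assume "L - 1 < i \<and> i < length w"
      then have "L \<le> i \<and> i < length w" using L0 by auto
      then show "w ! i \<noteq> u" using Lw(3) by blast
    qed
    have uin: "u \<in> set w" using Lw(2) l1 nth_mem by metis
    have am: "amb (w @ [u]) \<longleftrightarrow> cov (w @ [u]) L"
      using amb_snoc_iff[OF na l1 Lw(2) l3] L0 by simp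
    have S: "Srt (sF s2) (sC s2) (sH s2)" using P by blast
    have dd: "dead s2 u \<longleftrightarrow> covS (sF s2) (sC s2) (sH s2) L"
    proof
      assume dead: "dead s2 u"
      show "covS (sF s2) (sC s2) (sH s2) L"
      proof (rule ccontr)
        assume nc: "\<not> covS (sF s2) (sC s2) (sH s2) L"
        then have "\<not> cov (w @ [u]) L" using P by blast
        then have "Tinv (sF s2) (sC s2) (sH s2) L (sHx s u)" using P L0 L_def by blast
        then show False using dead P unfolding dead_def Tinv_def Let_def L_def by auto
      qed
    next
      assume "covS (sF s2) (sC s2) (sH s2) L"
      then obtain i where i: "1 \<le> i" "i \<le> sH s2" "sF s2 i \<le> L" "L \<le> sC s2 i" unfolding covS_def by auto
      show "dead s2 u"
      proof (rule ccontr)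
        assume nd: "\<not> dead s2 u"
        define hx where "hx = sHx s u"
        have T: "hx \<le> sH s2" "hx \<noteq> 0 \<longrightarrow> sC s2 hx < L" "Suc hx \<le> sH s2 \<longrightarrow> L < sF s2 (Suc hx)"
          using nd P unfolding dead_def Let_def hx_def L_def by auto
        show False
        proof (cases "i \<le> hx")
          case True
          then have "sC s2 i \<le> sC s2 hx" using Srt_C_mono[OF S i(1) True T(1)] by simp
          then show False using T(2) i True by auto
        next
          case False
          then have "sF s2 (Suc hx) \<le> sF s2 i" using Srt_F_mono[OF S _ _ i(2)] by auto
          then show False using T(3) i False by auto
        qed
      qed
    qed
    have cv: "amb (w @ [u]) \<longleftrightarrow> dead s2 u" using am dd P by blast
    show ?thesis
    proof (cases "dead s2 u")
      case True
      have q: "query s2 u = s2\<lparr>sAmb := 1\<rparr>" unfolding query_def using True False P by simp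
      show ?thesis unfolding ab q using cv True P s2_def by simp
    next
      case nd: False
      have q: "query s2 u = upd s2 u" unfolding query_def using nd False P by simp
      have ok: "\<not> cov (w @ [u]) (sLast s u)" using cv nd am L_def by simp
      have "Deep (w @ [u]) (upd s2 u)"
        by (rule Deep_final[OF D, where r=s2]) (use P ok uin in auto)
      moreover have "sAmb (upd s2 u) = 0" using P a0 unfolding upd_def by simp
      ultimately show ?thesis unfolding ab q using cv nd Hq P s2_def q by simp
    qed
  qed
qed

fun bgl :: "'a list \<Rightarrow> ('a \<times> 'a) multiset" where
  "bgl (a # b # r) = add_mset (a, b) (bgl (b # r))"
| "bgl _ = {#}"

lemma bgl_zip: "bgl xs = mset (zip xs (tl xs))"
  by (induction xs rule: bgl.induct) auto

lemma bigram_bgl: "bigram x (c, d) = count (bgl x) (c, d)"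
proof -
  have "count (bgl x) (c, d) = length (filter ((=) (c, d)) (zip x (tl x)))"
    unfolding bgl_zip by (simp add: count_mset count_list_eq_length_filter)
  also have "\<dots> = card {i. i < length (zip x (tl x)) \<and> (c, d) = zip x (tl x) ! i}"
    by (rule length_filter_conv_card)
  also have "{i. i < length (zip x (tl x)) \<and> (c, d) = zip x (tl x) ! i} = {j. Suc j < length x \<and> x ! j = c \<and> x ! Suc j = d}"
    by (auto simp: nth_tl)
  finally show ?thesis unfolding bigram_def by simp
qed

lemma bigram_eq_iff: "bigram x = bigram y \<longleftrightarrow> bgl x = bgl y"
proof
  assume "bigram x = bigram y"
  then show "bgl x = bgl y" by (metis bigram_bgl multiset_eqI surj_pair)
next
  assume "bgl x = bgl y"
  then show "bigram x = bigram y" by (intro ext) (metis bigram_bgl surj_pair)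
qed

lemma bgl_split: "bgl (xs @ y # ys) = bgl (xs @ [y]) + bgl (y # ys)"
proof (induction xs rule: bgl.induct)
  case (1 a b r)
  then show ?case by simp
next
  case ("2_1") then show ?case by simp
next
  case ("2_2" a) then show ?case by (cases ys) auto
qed

lemma bgl_glue: "xs \<noteq> [] \<Longrightarrow> ys \<noteq> [] \<Longrightarrow> last xs = hd ys \<Longrightarrow> bgl (xs @ tl ys) = bgl xs + bgl ys"
proof -
  assume a: "xs \<noteq> []" "ys \<noteq> []" "last xs = hd ys"
  obtain y ys' where ys: "ys = y # ys'" using a(2) by (cases ys) auto
  obtain xs0 where xs: "xs = xs0 @ [y]" using a(1,3) ys by (metis append_butlast_last_id list.sel(1))
  show ?thesis unfolding xs ys using bgl_split[of xs0 y ys'] by simp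
qed

lemma size_bgl: "size (bgl xs) = length xs - 1"
  by (induction xs rule: bgl.induct) auto

lemma bgl_map: "bgl (map f xs) = image_mset (map_prod f f) (bgl xs)"
  by (induction xs rule: bgl.induct) auto

lemma in_bgl: "(c, d) \<in># bgl xs \<longleftrightarrow> (\<exists>r. Suc r < length xs \<and> xs ! r = c \<and> xs ! Suc r = d)"
proof -
  have "(c, d) \<in># bgl xs \<longleftrightarrow> (\<exists>i < length (zip xs (tl xs)). zip xs (tl xs) ! i = (c, d))"
    unfolding bgl_zip in_multiset_in_set by (auto simp: in_set_conv_nth)
  also have "\<dots> \<longleftrightarrow> (\<exists>r. Suc r < length xs \<and> xs ! r = c \<and> xs ! Suc r = d)"
  proof
    assume "\<exists>i < length (zip xs (tl xs)). zip xs (tl xs) ! i = (c, d)"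
    then obtain i where "i < length (zip xs (tl xs))" "zip xs (tl xs) ! i = (c, d)" by blast
    then show "\<exists>r. Suc r < length xs \<and> xs ! r = c \<and> xs ! Suc r = d"
      by (intro exI[of _ i]) (auto simp: nth_tl)
  next
    assume "\<exists>r. Suc r < length xs \<and> xs ! r = c \<and> xs ! Suc r = d"
    then obtain r where "Suc r < length xs" "xs ! r = c" "xs ! Suc r = d" by blast
    then show "\<exists>i < length (zip xs (tl xs)). zip xs (tl xs) ! i = (c, d)"
      by (intro exI[of _ r]) (auto simp: nth_tl)
  qed
  finally show ?thesis .
qed

lemma bgl_snoc: "bgl (xs @ [z]) = bgl xs + (if xs = [] then {#} else {#(last xs, z)#})"
proof (cases "xs = []")
  case False
  then obtain xs0 x where xs: "xs = xs0 @ [x]" by (metis append_butlast_last_id)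
  show ?thesis using bgl_split[of xs0 x "[z]"] xs by simp
qed simp

lemma bgl_delim: "w \<noteq> [] \<Longrightarrow> bgl (delim w) = add_mset (None, Some (hd w)) (add_mset (Some (last w), None) (image_mset (map_prod Some Some) (bgl w)))"
proof -
  assume ne: "w \<noteq> []"
  obtain x w' where w: "w = x # w'" using ne by (cases w) auto
  have "bgl (delim w) = add_mset (None, Some x) (bgl (map Some w @ [None]))"
    unfolding delim_def w by simp
  also have "bgl (map Some w @ [None]) = bgl (map Some w) + {#(Some (last w), None)#}"
    using bgl_snoc[of "map Some w" None] ne by (simp add: last_map)
  finally show ?thesis using w bgl_map[of Some w] by simp
qed


definition sl :: "'a list \<Rightarrow> nat \<Rightarrow> nat \<Rightarrow> 'a list" where
  "sl w lo hi = take (Suc hi - lo) (drop lo w)"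

lemma sl_len: "lo \<le> hi \<Longrightarrow> hi < length w \<Longrightarrow> length (sl w lo hi) = Suc hi - lo"
  unfolding sl_def by simp

lemma sl_nth: "lo \<le> hi \<Longrightarrow> hi < length w \<Longrightarrow> i < Suc hi - lo \<Longrightarrow> sl w lo hi ! i = w ! (lo + i)"
  unfolding sl_def by simp

lemma sl_ne: "lo \<le> hi \<Longrightarrow> hi < length w \<Longrightarrow> sl w lo hi \<noteq> []"
  using sl_len[of lo hi w] by auto

lemma sl_hd: "lo \<le> hi \<Longrightarrow> hi < length w \<Longrightarrow> hd (sl w lo hi) = w ! lo"
  using sl_nth[of lo hi w 0] sl_ne[of lo hi w] by (simp add: hd_conv_nth)

lemma sl_last: "lo \<le> hi \<Longrightarrow> hi < length w \<Longrightarrow> last (sl w lo hi) = w ! hi"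
  using sl_nth[of lo hi w "hi - lo"] sl_ne[of lo hi w] sl_len[of lo hi w] by (simp add: last_conv_nth)

lemma sl_set: "set (sl w lo hi) \<subseteq> set w"
  unfolding sl_def by (meson order.trans set_drop_subset set_take_subset)

lemma sl_glue:
  assumes "lo \<le> mid" "mid \<le> hi" "hi < length w"
  shows "sl w lo mid @ tl (sl w mid hi) = sl w lo hi"
proof (rule nth_equalityI)
  show "length (sl w lo mid @ tl (sl w mid hi)) = length (sl w lo hi)"
    using assms sl_len[of lo mid w] sl_len[of mid hi w] sl_len[of lo hi w] by simp
next
  fix i assume i: "i < length (sl w lo mid @ tl (sl w mid hi))"
  then have i2: "i < Suc hi - lo"
    using assms sl_len[of lo mid w] sl_len[of mid hi w] by simp
  show "(sl w lo mid @ tl (sl w mid hi)) ! i = sl w lo hi ! i"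
  proof (cases "i < Suc mid - lo")
    case True
    then show ?thesis using assms sl_len[of lo mid w] sl_nth[of lo mid w i] sl_nth[of lo hi w i] i2
      by (simp add: nth_append)
  next
    case False
    have "tl (sl w mid hi) ! (i - (Suc mid - lo)) = sl w mid hi ! Suc (i - (Suc mid - lo))"
      using assms sl_len[of mid hi w] i2 False by (simp add: nth_tl)
    also have "\<dots> = w ! (mid + Suc (i - (Suc mid - lo)))"
      by (rule sl_nth) (use assms i2 False in auto)
    also have "mid + Suc (i - (Suc mid - lo)) = lo + i" using assms False by simp
    finally have e: "tl (sl w mid hi) ! (i - (Suc mid - lo)) = w ! (lo + i)" .
    show ?thesis using assms sl_len[of lo mid w] sl_nth[of lo hi w i] i2 False e
      by (simp add: nth_append)
  qed
qed

lemma sl_all: "w \<noteq> [] \<Longrightarrow> sl w 0 (length w - 1) = w"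
  unfolding sl_def by simp

lemma last_glue: "xs \<noteq> [] \<Longrightarrow> ys \<noteq> [] \<Longrightarrow> last xs = hd ys \<Longrightarrow> last (xs @ tl ys) = last ys"
  by (cases ys) (auto simp: last_append)

lemma bgl_sl_split: "lo \<le> mid \<Longrightarrow> mid \<le> hi \<Longrightarrow> hi < length w \<Longrightarrow> bgl (sl w lo hi) = bgl (sl w lo mid) + bgl (sl w mid hi)"
  using bgl_glue[of "sl w lo mid" "sl w mid hi"] sl_glue[of lo mid hi w] sl_ne[of lo mid w] sl_ne[of mid hi w]
    sl_last[of lo mid w] sl_hd[of mid hi w] by simp

lemma amb_not_uniq:
  assumes A: "amb w" and sw: "set w \<subseteq> \<Sigma>"
  shows "\<not> uniq_dec \<Sigma> w"
proof -
  obtain a c i j where h: "a < c" "c < j" "j < length w" "w ! a = w ! c" "w ! Suc a \<noteq> w ! Suc c"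
    "a \<le> i" "i \<le> c" "w ! i = w ! j" using A unfolding amb_def by blast
  define n where "n = length w"
  have ne: "w \<noteq> []" using h by auto
  have jn: "j \<le> n - 1" using h n_def by simp
  define G1 where "G1 = sl w 0 a @ tl (sl w c j)"
  define G2 where "G2 = G1 @ tl (sl w i c)"
  define G3 where "G3 = G2 @ tl (sl w a i)"
  define y where "y = G3 @ tl (sl w j (n - 1))"
  have nn: "n - 1 < length w" using ne n_def by simp
  have ne1: "G1 \<noteq> []" unfolding G1_def using sl_ne[of 0 a w] h by simp
  have ne2: "G2 \<noteq> []" unfolding G2_def using ne1 by simp
  have ne3: "G3 \<noteq> []" unfolding G3_def using ne2 by simp
  have L1: "last G1 = w ! j" unfolding G1_def
    using last_glue[OF sl_ne[of 0 a w] sl_ne[of c j w]] sl_last[of 0 a w] sl_last[of c j w] sl_hd[of c j w] h by auto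
  have L2: "last G2 = w ! c" unfolding G2_def
    using last_glue[OF ne1 sl_ne[of i c w]] sl_last[of i c w] sl_hd[of i c w] h L1 by auto
  have L3: "last G3 = w ! i" unfolding G3_def
    using last_glue[OF ne2 sl_ne[of a i w]] sl_last[of a i w] sl_hd[of a i w] h L2 by auto
  have B1: "bgl G1 = bgl (sl w 0 a) + bgl (sl w c j)" unfolding G1_def
    using bgl_glue[OF sl_ne[of 0 a w] sl_ne[of c j w]] sl_last[of 0 a w] sl_hd[of c j w] h by auto
  have B2: "bgl G2 = bgl G1 + bgl (sl w i c)" unfolding G2_def
    using bgl_glue[OF ne1 sl_ne[of i c w]] sl_hd[of i c w] h L1 by auto
  have B3: "bgl G3 = bgl G2 + bgl (sl w a i)" unfolding G3_def
    using bgl_glue[OF ne2 sl_ne[of a i w]] sl_hd[of a i w] h L2 by auto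
  have B4: "bgl y = bgl G3 + bgl (sl w j (n - 1))" unfolding y_def
    using bgl_glue[OF ne3 sl_ne[of j "n - 1" w]] sl_hd[of j "n - 1" w] h L3 jn nn by auto
  have W: "bgl w = bgl (sl w 0 a) + bgl (sl w a i) + bgl (sl w i c) + bgl (sl w c j) + bgl (sl w j (n - 1))"
  proof -
    have "bgl w = bgl (sl w 0 (n - 1))" using sl_all[OF ne] n_def by simp
    also have "\<dots> = bgl (sl w 0 a) + bgl (sl w a (n - 1))" using bgl_sl_split[of 0 a "n - 1" w] h jn nn by simp
    also have "bgl (sl w a (n - 1)) = bgl (sl w a i) + bgl (sl w i (n - 1))" using bgl_sl_split[of a i "n - 1" w] h jn nn by simp
    also have "bgl (sl w i (n - 1)) = bgl (sl w i c) + bgl (sl w c (n - 1))" using bgl_sl_split[of i c "n - 1" w] h jn nn by simp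
    also have "bgl (sl w c (n - 1)) = bgl (sl w c j) + bgl (sl w j (n - 1))" using bgl_sl_split[of c j "n - 1" w] h jn nn by simp
    finally show ?thesis by (simp add: add.assoc)
  qed
  have byw: "bgl y = bgl w" using W B1 B2 B3 B4 by (simp add: add_ac)
  have yne: "y \<noteq> []" unfolding y_def using ne3 by simp
  have "hd y = hd (sl w 0 a)" unfolding y_def G3_def G2_def G1_def
    using sl_ne[of 0 a w] h by (simp add: hd_append2)
  then have hdy: "hd y = hd w" using sl_hd[of 0 a w] h ne by (simp add: hd_conv_nth)
  have lasty: "last y = last w" unfolding y_def
    using last_glue[OF ne3 sl_ne[of j "n - 1" w]] sl_last[of j "n - 1" w] sl_hd[of j "n - 1" w] h L3 jn nn ne n_def
    by (simp add: last_conv_nth)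
  have bd: "bgl (delim y) = bgl (delim w)" using bgl_delim[OF yne] bgl_delim[OF ne] byw hdy lasty by simp
  have lenG1: "length G1 = Suc a + (j - c)" unfolding G1_def using sl_len[of 0 a w] sl_len[of c j w] h by simp
  have "G1 ! Suc a = w ! Suc c"
  proof -
    have "G1 ! Suc a = tl (sl w c j) ! 0" unfolding G1_def using sl_len[of 0 a w] h by (simp add: nth_append)
    also have "\<dots> = sl w c j ! 1" using sl_len[of c j w] h by (simp add: nth_tl)
    also have "\<dots> = w ! Suc c" using sl_nth[of c j w 1] h by simp
    finally show ?thesis .
  qed
  moreover have "y = G1 @ (tl (sl w i c) @ tl (sl w a i) @ tl (sl w j (n - 1)))" unfolding y_def G3_def G2_def by simp
  moreover have "Suc a < length G1" using lenG1 h by simp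
  ultimately have ya: "y ! Suc a = w ! Suc c" by (simp add: nth_append)
  have yw: "y \<noteq> w" using ya h(5) by auto
  have tls: "set (tl xs) \<subseteq> set xs" for xs :: "'a list" by (cases xs) auto
  have "set y \<subseteq> set w" unfolding y_def G3_def G2_def G1_def
    using sl_set[of w 0 a] sl_set[of w c j] sl_set[of w i c] sl_set[of w a i] sl_set[of w j "n - 1"]
      tls[of "sl w c j"] tls[of "sl w i c"] tls[of "sl w a i"] tls[of "sl w j (n - 1)"] by auto
  then have sy: "set y \<subseteq> \<Sigma>" using sw by auto
  show ?thesis unfolding uniq_dec_def using sy bd yw bigram_eq_iff by blast
qed


lemma core_swap:
  assumes B: "bgl S = bgl S'" and L: "length S = length S'" and e0: "S ! 0 = S' ! 0" and d1: "S ! 1 \<noteq> S' ! 1"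
    and l1: "1 < length S" and r: "Suc r < length S" "S ! r = S ! 0" "S ! Suc r = S' ! 1"
  shows "\<exists>i j. i \<le> r \<and> Suc r \<le> j \<and> j < length S \<and> S ! i = S ! j"
proof (rule ccontr)
  assume "\<not> (\<exists>i j. i \<le> r \<and> Suc r \<le> j \<and> j < length S \<and> S ! i = S ! j)"
  then have H: "\<And>i j. i \<le> r \<Longrightarrow> Suc r \<le> j \<Longrightarrow> j < length S \<Longrightarrow> S ! i \<noteq> S ! j" by blast
  define VP where "VP z \<longleftrightarrow> (\<exists>j. Suc r \<le> j \<and> j < length S \<and> S ! j = z)" for z
  have V: "1 \<le> q \<Longrightarrow> q < length S' \<Longrightarrow> VP (S' ! q)" for q
  proof (induction q)
    case 0 then show ?case by simp
  next
    case (Suc q)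
    show ?case
    proof (cases "q = 0")
      case True then show ?thesis unfolding VP_def using r by (intro exI[of _ "Suc r"]) auto
    next
      case False
      then have IH: "VP (S' ! q)" using Suc by simp
      then obtain j0 where j0: "Suc r \<le> j0" "j0 < length S" "S ! j0 = S' ! q" unfolding VP_def by blast
      have "(S' ! q, S' ! Suc q) \<in># bgl S'" unfolding in_bgl using Suc.prems by blast
      then have "(S' ! q, S' ! Suc q) \<in># bgl S" using B by simp
      then obtain r2 where r2: "Suc r2 < length S" "S ! r2 = S' ! q" "S ! Suc r2 = S' ! Suc q" unfolding in_bgl by blast
      have "\<not> r2 \<le> r" using H[of r2 j0] j0 r2 by auto
      then show ?thesis unfolding VP_def using r2 by (intro exI[of _ "Suc r2"]) auto
    qed
  qed
  have "(S ! 0, S ! 1) \<in># bgl S" unfolding in_bgl using l1 by (intro exI[of _ 0]) auto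
  then have "(S ! 0, S ! 1) \<in># bgl S'" using B by simp
  then obtain r3 where r3: "Suc r3 < length S'" "S' ! r3 = S ! 0" "S' ! Suc r3 = S ! 1" unfolding in_bgl by blast
  show False
  proof (cases "r3 = 0")
    case True then show False using r3 d1 by simp
  next
    case False
    then have "VP (S' ! r3)" using V[of r3] r3(1) by auto
    then obtain j0 where "Suc r \<le> j0" "j0 < length S" "S ! j0 = S ! 0" unfolding VP_def using r3 by auto
    then show False using H[of 0 j0] by auto
  qed
qed

lemma delim_len: "length (delim w) = length w + 2"
  unfolding delim_def by simp

lemma delim_nth: "k < length w + 2 \<Longrightarrow> delim w ! k = (if k = 0 then None else if k \<le> length w then Some (w ! (k - 1)) else None)"
  unfolding delim_def by (auto simp: nth_append nth_Cons')

lemma not_uniq_amb: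
  assumes "\<not> uniq_dec \<Sigma> w"
  shows "amb w"
proof -
  obtain x where x: "bigram (delim x) = bigram (delim w)" "x \<noteq> w" using assms unfolding uniq_dec_def by blast
  define s where "s = delim w"
  define s' where "s' = delim x"
  define n where "n = length w"
  have B: "bgl s = bgl s'" using x(1) bigram_eq_iff unfolding s_def s'_def by metis
  have "size (bgl s) = size (bgl s')" using B by simp
  then have Ls: "length s = length s'" using size_bgl[of s] size_bgl[of s'] unfolding s_def s'_def delim_len by simp
  have ls: "length s = n + 2" unfolding s_def n_def delim_len by simp
  have lx: "length x = n" using Ls ls unfolding s'_def delim_len by simp
  have ss: "s \<noteq> s'"
  proof
    assume "s = s'"
    then have "map Some w = map Some x" unfolding s_def s'_def delim_def by simp
    then show False using x(2) by (simp add: inj_map_eq_map)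
  qed
  have ex: "\<exists>p. p < length s \<and> s ! p \<noteq> s' ! p" using ss Ls nth_equalityI by blast
  define p where "p = (LEAST p. p < length s \<and> s ! p \<noteq> s' ! p)"
  have p: "p < length s" "s ! p \<noteq> s' ! p" using LeastI_ex[OF ex] unfolding p_def by auto
  have pmin: "\<And>i. i < p \<Longrightarrow> s ! i = s' ! i"
  proof -
    fix i assume "i < p"
    then have "\<not> (i < length s \<and> s ! i \<noteq> s' ! i)" using not_less_Least[of i] unfolding p_def by blast
    then show "s ! i = s' ! i" using \<open>i < p\<close> p(1) by auto
  qed
  have sn: "\<And>k. k < n + 2 \<Longrightarrow> s ! k = (if k = 0 then None else if k \<le> n then Some (w ! (k - 1)) else None)"
    unfolding s_def n_def by (rule delim_nth)
  have sn': "\<And>k. k < n + 2 \<Longrightarrow> s' ! k = (if k = 0 then None else if k \<le> n then Some (x ! (k - 1)) else None)"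
    unfolding s'_def using delim_nth[of _ x] lx by simp
  have p1: "1 \<le> p" using p sn sn' ls by (cases p) auto
  define A where "A = p - 1"
  define S where "S = drop A s"
  define S' where "S' = drop A s'"
  have tk: "take p s = take p s'" using pmin p(1) Ls by (intro nth_equalityI) auto
  have split: "bgl z = bgl (take p z) + bgl (drop A z)" if "p < length z" for z :: "'a option list"
  proof -
    have "z = take A z @ z ! A # drop p z" using that id_take_nth_drop[of A z] p1 unfolding A_def by simp
    then have "bgl z = bgl (take A z @ [z ! A]) + bgl (z ! A # drop p z)" using bgl_split by metis
    moreover have "take A z @ [z ! A] = take p z" using that p1 take_Suc_conv_app_nth[of A z] unfolding A_def by simp
    moreover have "z ! A # drop p z = drop A z" using that p1 Cons_nth_drop_Suc[of A z] unfolding A_def by simp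
    ultimately show ?thesis by simp
  qed
  have BS: "bgl S = bgl S'" using split[of s] split[of s'] p(1) Ls B tk unfolding S_def S'_def by simp
  have LS: "length S = length S'" "length S = n + 2 - A" unfolding S_def S'_def using Ls ls by auto
  have Snth: "S ! k = s ! (A + k)" "S' ! k = s' ! (A + k)" if "k < length S" for k
    using that LS unfolding S_def S'_def by auto
  have e0: "S ! 0 = S' ! 0"
  proof -
    have "0 < length S" using LS p ls unfolding A_def by auto
    then have "S ! 0 = s ! A" "S' ! 0 = s' ! A" using Snth[of 0] by auto
    moreover have "s ! A = s' ! A" using pmin[of A] p1 unfolding A_def by simp
    ultimately show ?thesis by simp
  qed
  have l1: "1 < length S" using LS p ls unfolding A_def by auto
  have Sne: "S \<noteq> []" using l1 by auto
  have d1: "S ! 1 \<noteq> S' ! 1" using Snth[of 1] l1 p p1 unfolding A_def by auto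
  have "(S' ! 0, S' ! 1) \<in># bgl S'" unfolding in_bgl using l1 LS by (intro exI[of _ 0]) auto
  then have "(S ! 0, S' ! 1) \<in># bgl S" using BS e0 by simp
  then obtain r where r: "Suc r < length S" "S ! r = S ! 0" "S ! Suc r = S' ! 1" unfolding in_bgl by blast
  have r0: "r \<noteq> 0"
  proof
    assume "r = 0" then show False using r(3) d1 by simp
  qed
  obtain i j where ij: "i \<le> r" "Suc r \<le> j" "j < length S" "S ! i = S ! j"
    using core_swap[OF BS LS(1) e0 d1 l1 r] by blast
  have Ar: "A + Suc r < n + 2" using r(1) LS by simp
  have A1: "1 \<le> A"
  proof (rule ccontr)
    assume "\<not> 1 \<le> A"
    then have A0: "A = 0" by simp
    have "0 < length S" using r(1) by (metis less_trans zero_less_Suc)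
    then have S0: "S ! 0 = s ! 0" using Snth(1)[of 0] A0 by simp
    have "s ! 0 = None" using sn[of 0] by simp
    then have "s ! r = None" using r(2) Snth[of r] r(1) A0 S0 by simp
    then show False using sn[of r] r0 Ar A0 by (auto split: if_splits)
  qed
  have inr: "\<And>k. 1 \<le> k \<Longrightarrow> k \<le> n \<Longrightarrow> s ! k = Some (w ! (k - 1))" using sn by simp
  have Arn: "A + r \<le> n" using Ar by simp
  have Ain: "A + i \<le> n" "1 \<le> A + i" using ij Arn A1 by auto
  have sAi: "s ! (A + i) \<noteq> None" using inr[OF Ain(2) Ain(1)] by simp
  have sAj: "s ! (A + j) = s ! (A + i)" using ij Snth[of i] Snth[of j] by auto
  have Ajn: "A + j \<le> n"
  proof (rule ccontr)
    assume "\<not> A + j \<le> n"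
    then have "s ! (A + j) = None" using sn[of "A + j"] ij LS by simp
    then show False using sAj sAi by simp
  qed
  define a where "a = A - 1"
  define c where "c = A + r - 1"
  define iw where "iw = A + i - 1"
  define jw where "jw = A + j - 1"
  have wa: "w ! a = w ! c"
  proof -
    have "s ! A = s ! (A + r)" using r(2) Snth[of 0] Snth[of r] r(1) Sne by simp
    then show ?thesis using inr[of A] inr[of "A + r"] A1 Arn unfolding a_def c_def by simp
  qed
  have wsa: "w ! Suc a \<noteq> w ! Suc c"
  proof -
    have "s ! (A + 1) \<noteq> s ! (A + Suc r)" using d1 r(3) Snth[of 1] Snth[of "Suc r"] r(1) l1 by simp
    moreover have "A + Suc r \<le> n" using ij Ajn by simp
    ultimately show ?thesis using inr[of "A + 1"] inr[of "A + Suc r"] A1 Arn r0 unfolding a_def c_def by auto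
  qed
  have wij: "w ! iw = w ! jw" using sAj inr[OF Ain(2) Ain(1)] inr[of "A + j"] Ajn A1 unfolding iw_def jw_def by simp
  show "amb w" unfolding amb_def
    by (rule exI[of _ a], rule exI[of _ c], rule exI[of _ iw], rule exI[of _ jw])
       (use wa wsa wij A1 r0 ij Ajn n_def in \<open>auto simp: a_def c_def iw_def jw_def\<close>)
qed

lemma uniq_char: "uniq_dec \<Sigma> w \<longleftrightarrow> \<not> amb w" if "set w \<subseteq> \<Sigma>"
  using amb_not_uniq[OF _ that] not_uniq_amb by blast

definition Bnd :: "nat \<Rightarrow> st \<Rightarrow> bool" where
  "Bnd k s \<longleftrightarrow> sAmb s \<le> 1 \<and> sH s \<le> k \<and> sP s \<le> k \<and>
    (\<forall>y. sLast s y \<le> sJ s \<and> sFirst s y \<le> sJ s \<and> sSucc s y \<le> k \<and> sHx s y \<le> k \<and> sF s y \<le> sJ s \<and> sC s y \<le> sJ s)"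

lemma eb_Bnd: "Bnd k s \<Longrightarrow> sJ s \<le> V \<Longrightarrow> k \<le> V \<Longrightarrow> 1 \<le> V \<Longrightarrow> eb k V s"
  unfolding Bnd_def eb_def by (auto intro: order.trans)

lemma Bnd_dev:
  assumes B: "Bnd k s" and u: "u < k" and H: "sH (dev (s\<lparr>sJ := Suc (sJ s)\<rparr>) u) \<le> k"
  shows "Bnd k (dev (s\<lparr>sJ := Suc (sJ s)\<rparr>) u) \<and> sJ (dev (s\<lparr>sJ := Suc (sJ s)\<rparr>) u) = Suc (sJ s) \<and>
    sAmb (dev (s\<lparr>sJ := Suc (sJ s)\<rparr>) u) = sAmb s"
proof -
  have FV: "\<forall>y\<le>sH s. sF s y \<le> Suc (sJ s)" using B unfolding Bnd_def by (auto intro: le_SucI)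
  have fV: "sFirst s (sP s) \<le> Suc (sJ s)" using B unfolding Bnd_def by (auto intro: le_SucI)
  have m: "snd (mloop (sF s) (sC s) (sH s) (sFirst s (sP s))) \<le> Suc (sJ s)"
    by (rule mloop_snd_le[OF FV fV])
  show ?thesis using B u H m unfolding dev_def Let_def Bnd_def
    by (auto split: if_splits intro: le_SucI)
qed

lemma Bnd_query:
  assumes B: "Bnd k s" and u: "u < k"
  shows "Bnd k (query s u) \<and> sJ (query s u) = sJ s \<and> sH (query s u) = sH s"
  using B u unfolding query_def upd_def Bnd_def by auto

lemma Bnd_step:
  assumes B: "Bnd k s" and u: "u < k" and H: "sAmb s = 0 \<Longrightarrow> sH (dev (s\<lparr>sJ := Suc (sJ s)\<rparr>) u) \<le> k"
  shows "Bnd k (absstep s u)"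
proof (cases "sAmb s = 0")
  case True
  then show ?thesis unfolding absstep_def using Bnd_dev[OF B u H[OF True]] Bnd_query u by simp
next
  case False then show ?thesis unfolding absstep_def using B by simp
qed

definition Inv :: "nat \<Rightarrow> nat list \<Rightarrow> st \<Rightarrow> bool" where
  "Inv k v s \<longleftrightarrow> Bnd k s \<and> sJ s \<le> length v \<and> (sAmb s \<noteq> 0 \<longleftrightarrow> amb v) \<and> (sAmb s = 0 \<longrightarrow> Deep v s)"

lemma H_step: "sH (absstep s u) \<le> Suc (sH s)"
proof (cases "sAmb s = 0")
  case True
  have "sH (dev (s\<lparr>sJ := Suc (sJ s)\<rparr>) u) \<le> Suc (sH s)"
    unfolding dev_def Let_def using mloop_le by (auto split: if_splits)
  then show ?thesis unfolding absstep_def query_def upd_def using True by simp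
next
  case False then show ?thesis unfolding absstep_def by simp
qed

lemma Inv_step:
  assumes I: "Inv k v s" and u: "u < k" and sv: "set v \<subseteq> {..<k}"
  shows "Inv k (v @ [u]) (absstep s u) \<and> (sAmb s = 0 \<longrightarrow> sH (dev (s\<lparr>sJ := Suc (sJ s)\<rparr>) u) \<le> k)"
proof (cases "sAmb s = 0")
  case True
  have D: "Deep v s" and na: "\<not> amb v" and B: "Bnd k s" using I True unfolding Inv_def by auto
  note SC = step_correct[OF D na True, of u]
  have "card (set v) \<le> k" using card_mono[OF _ sv] by simp
  then have Hk: "sH (dev (s\<lparr>sJ := Suc (sJ s)\<rparr>) u) \<le> k" using SC by simp
  have B': "Bnd k (absstep s u)" by (rule Bnd_step[OF B u Hk])
  have J: "sJ (absstep s u) \<le> length (v @ [u])"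
    using Bnd_dev[OF B u Hk] Bnd_query[of k _ u] u Deep_D(1)[OF D] True unfolding absstep_def
    by auto
  show ?thesis unfolding Inv_def using B' J SC Hk by auto
next
  case False
  then have "amb v" using I unfolding Inv_def by simp
  then have "amb (v @ [u])" by (rule amb_mono)
  then show ?thesis using I False unfolding Inv_def absstep_def by auto
qed


lemma enc_upd0: "(enc k s)(0 := u) = memT k s u (\<lambda>_. 0)"
  by (rule ext) (simp add: memT_def enc_def)

lemma run_step:
  assumes I: "Inv k v s" and u: "u < k" and sv: "set v \<subseteq> {..<k}" and S: "22 + 6*k \<le> S" and V: "Suc (length v) + 22 + 6*k \<le> V"
  shows "\<exists>t. run Pstep S V ((enc k s)(0 := u)) = Some (t, enc k (absstep s u)) \<and>
           t \<le> 150 + 23 * (sH s + 1 - sH (absstep s u))"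
proof -
  have B: "Bnd k s" and J: "sJ s \<le> length v" using I unfolding Inv_def by auto
  have e: "eb k V s" by (rule eb_Bnd[OF B]) (use J V in auto)
  have w: "wp Pstep S V 0 (memT k s u (\<lambda>_. 0)) (\<lambda>t m. m = enc k (absstep s u) \<and> t \<le> 150 + 23 * (sH s + 1 - sH (absstep s u)))"
  proof (rule stepL[OF u])
    show "sH s \<le> k" "sP s \<le> k" using B unfolding Bnd_def by auto
    show "eb k V s" by (rule e)
    show "tb V (\<lambda>_. 0)" unfolding tb_def by simp
    show "22 + 6 * k \<le> S" by (rule S)
    show "22 + 6 * k \<le> V" using V by simp
    show "Suc (sJ s) \<le> V" using J V by simp
    show "sAmb s = 0 \<Longrightarrow> sH (dev (s\<lparr>sJ := Suc (sJ s)\<rparr>) u) \<le> k" using Inv_step[OF I u sv] by simp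
  qed
  show ?thesis using run_wp[OF w] unfolding enc_upd0 by auto
qed

lemma stream_ok:
  "\<forall>v s. Inv k v s \<longrightarrow> set (v @ w) \<subseteq> {..<k} \<longrightarrow> length (v @ w) + 22 + 6 * k \<le> V \<longrightarrow> 22 + 6 * k \<le> S \<longrightarrow>
   (\<exists>t s'. stream Pstep S V (enc k s) w = Some (t, enc k s') \<and> Inv k (v @ w) s' \<and> length w \<le> t \<and>
       t + 23 * sH s' \<le> 174 * length w + 23 * sH s)"
proof (induction w)
  case Nil
  show ?case
  proof (intro allI impI)
    fix v s assume "Inv k v s"
    then show "\<exists>t s'. stream Pstep S V (enc k s) [] = Some (t, enc k s') \<and> Inv k (v @ []) s' \<and> length [] \<le> t \<and>
       t + 23 * sH s' \<le> 174 * length [] + 23 * sH s" by (intro exI[of _ 0] exI[of _ s]) simp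
  qed
next
  case (Cons u w)
  show ?case
  proof (intro allI impI)
    fix v s assume I: "Inv k v s" and sv: "set (v @ u # w) \<subseteq> {..<k}" and V: "length (v @ u # w) + 22 + 6 * k \<le> V"
      and S: "22 + 6 * k \<le> S"
    have u: "u < k" and sv0: "set v \<subseteq> {..<k}" using sv by auto
    have V1: "Suc (length v) + 22 + 6 * k \<le> V" using V by simp
    obtain t1 where r: "run Pstep S V ((enc k s)(0 := u)) = Some (t1, enc k (absstep s u))"
      and t1: "t1 \<le> 150 + 23 * (sH s + 1 - sH (absstep s u))"
      using run_step[OF I u sv0 S V1] by auto
    have I1: "Inv k (v @ [u]) (absstep s u)" using Inv_step[OF I u sv0] by simp
    have Hs: "sH (absstep s u) \<le> Suc (sH s)" by (rule H_step)
    obtain t2 s' where r2: "stream Pstep S V (enc k (absstep s u)) w = Some (t2, enc k s')"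
      and I2: "Inv k ((v @ [u]) @ w) s'" and l2: "length w \<le> t2"
      and t2: "t2 + 23 * sH s' \<le> 174 * length w + 23 * sH (absstep s u)"
      using Cons.IH[rule_format, OF I1] sv V S by auto
    have "stream Pstep S V (enc k s) (u # w) = Some (Suc t1 + t2, enc k s')"
      using r r2 by simp
    moreover have "Suc t1 + t2 + 23 * sH s' \<le> 174 * length (u # w) + 23 * sH s"
      using t1 t2 Hs by simp
    ultimately show "\<exists>t s'. stream Pstep S V (enc k s) (u # w) = Some (t, enc k s') \<and> Inv k (v @ u # w) s' \<and>
       length (u # w) \<le> t \<and> t + 23 * sH s' \<le> 174 * length (u # w) + 23 * sH s"
      using I2 l2 by (intro exI[of _ "Suc t1 + t2"] exI[of _ s']) auto
  qed
qed

lemma bnd_upd[simp]: "bnd V m \<Longrightarrow> v \<le> V \<Longrightarrow> bnd V (m(a := v))"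
  unfolding bnd_def by auto

lemma Pfin_run:
  assumes "eb k V s" "22 \<le> S" "1 \<le> V"
  shows "\<exists>t m. run Pfin S V (enc k s) = Some (t, m) \<and> t \<le> 3 \<and> (m 0 \<noteq> 0 \<longleftrightarrow> sAmb s = 0)"
proof -
  have b: "bnd V (enc k s)" using assms(1) by simp
  have a2: "enc k s 2 = sAmb s" by (simp add: enc_def)
  have "wp Pfin S V 0 (enc k s) (\<lambda>t m. t \<le> 3 \<and> (m 0 \<noteq> 0 \<longleftrightarrow> sAmb s = 0))"
    using b assms a2
    apply -
    apply ((((rule conjI impI)+)?, rule wp_unfold, simp add: Pfin_def) | (auto; fail))+
    done
  then show ?thesis using run_wp by blast
qed

definition s0 :: st where
  "s0 = \<lparr>sAmb = 0, sJ = 0, sP = 0, sH = 0, sLast = \<lambda>_. 0, sFirst = \<lambda>_. 0, sSucc = \<lambda>_. 0,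
     sHx = \<lambda>_. 0, sF = \<lambda>_. 0, sC = \<lambda>_. 0\<rparr>"

lemma enc_s0: "enc k s0 = (\<lambda>_. 0)(1 := k)"
  by (rule ext) (simp add: enc_def s0_def fld_def)

lemma Inv_s0: "Inv k [] s0"
  unfolding Inv_def Bnd_def Deep_def s0_def amb_def cov_def covS_def Srt_def by simp

lemma pow_big: "(2::nat) \<le> x \<Longrightarrow> 16 * x \<le> x ^ 200"
proof -
  assume x: "2 \<le> x"
  have "(2::nat) ^ 199 \<le> x ^ 199" by (rule power_mono[OF x]) simp
  moreover have "(16::nat) \<le> 2 ^ 199" by simp
  ultimately have "16 \<le> x ^ 199" by linarith
  then have "16 * x \<le> x ^ 199 * x" by simp
  then show ?thesis by (simp add: power_Suc2[symmetric])
qed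

theorem mainTheorem2:
  "\<exists>(Pstep :: instr list) (Pfin :: instr list) (c :: nat).
     \<forall>(k :: nat) (w :: nat list). set w \<subseteq> {..<k} \<longrightarrow>
       (\<exists>t m. stream_alg Pstep Pfin (c * (k + 1)) ((length w + k + 2) ^ c) k w = Some (t, m)
          \<and> length w \<le> t \<and> t \<le> c * (length w + 1)
          \<and> (m 0 \<noteq> 0 \<longleftrightarrow> uniq_dec {..<k} w))"
proof (rule exI[of _ Pstep], rule exI[of _ Pfin], rule exI[of _ 200], intro allI impI)
  fix k :: nat and w :: "nat list"
  assume sw: "set w \<subseteq> {..<k}"
  define S where "S = 200 * (k + 1)"
  define V where "V = (length w + k + 2) ^ 200"
  have S22: "22 + 6 * k \<le> S" unfolding S_def by simp
  have "16 * (length w + k + 2) \<le> V" unfolding V_def by (rule pow_big) simp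
  then have V22: "length w + 22 + 6 * k \<le> V" by simp
  obtain t s' where st: "stream Pstep S V (enc k s0) w = Some (t, enc k s')" and I: "Inv k w s'"
    and lt: "length w \<le> t" and tt: "t + 23 * sH s' \<le> 174 * length w + 23 * sH s0"
    using stream_ok[of k w V S, rule_format, OF Inv_s0] sw V22 S22 by auto
  have B: "Bnd k s'" and J: "sJ s' \<le> length w" using I unfolding Inv_def by auto
  have e: "eb k V s'" by (rule eb_Bnd[OF B]) (use J V22 in auto)
  have S1: "22 \<le> S" using S22 by simp
  have V1: "1 \<le> V" using V22 by simp
  obtain t2 m where r: "run Pfin S V (enc k s') = Some (t2, m)" and t2: "t2 \<le> 3" and m: "m 0 \<noteq> 0 \<longleftrightarrow> sAmb s' = 0"
    using Pfin_run[OF e S1 V1] by metis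
  have sa: "stream_alg Pstep Pfin S V k w = Some (t + t2, m)"
    unfolding stream_alg_def using st r enc_s0 by simp
  have "sAmb s' = 0 \<longleftrightarrow> \<not> amb w" using I unfolding Inv_def by auto
  then have ok: "m 0 \<noteq> 0 \<longleftrightarrow> uniq_dec {..<k} w" using m uniq_char[OF sw] by simp
  have "t + t2 \<le> 200 * (length w + 1)" using tt t2 by (simp add: s0_def)
  then show "\<exists>t m. stream_alg Pstep Pfin (200 * (k + 1)) ((length w + k + 2) ^ 200) k w = Some (t, m)
          \<and> length w \<le> t \<and> t \<le> 200 * (length w + 1) \<and> (m 0 \<noteq> 0 \<longleftrightarrow> uniq_dec {..<k} w)"
    using sa lt ok unfolding S_def V_def by auto
qed

end
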